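(* Let $1<p_0<p<\infty$, $p'=p/(p-1)$, let $w\in\mathcal{A}_p$, and let $h\in\ell^{p'}(w)$ be a positive sequence. Let $\mathcal{M}'h:=\mathcal{M}(wh)/w$ and $$\mathcal{N}'h(n):=\sum_{s=0}^{\infty}\frac{(\mathcal{M}')^s h(n)}{2^s\|\mathcal{M}'\|_{\ell^{p'}(w)}^s},$$ where $(\mathcal{M}')^0h=h$, $(\mathcal{M}')^s$ is the $s$-fold iterate and $\|\mathcal{M}'\|_{\ell^{p'}(w)}$ is the (finite) operator norm of $\mathcal{M}'$ on $\ell^{p'}(w)$. Then $w(\mathcal{N}'h)^{\frac{p-p_0}{p-1}}\in\mathcal{A}_{p_0}$ and $$\Big[w(\mathcal{N}'h)^{\frac{p-p_0}{p-1}}\Big]_{\mathcal{A}_{p_0}}\le\big[(\mathcal{N}'h)w\big]_{\mathcal{A}_1}^{\frac{p-p_0}{p-1}}[w]_{\mathcal{A}_p}^{\frac{p_0-1}{p-1}}.$$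
   Context: Throughout, a weight is a sequence $w=\{w(k)\}_{k\ge 1}$ of strictly positive real numbers indexed by $\mathbb{Z}_+=\{1,2,\dots\}$. For $1\le q<\infty$ and a weight $v$, $\ell^q(v)$ is the space of real sequences $f$ with $\|f\|_{\ell^q(v)}=\big(\sum_{k\ge1}v(k)|f(k)|^q\big)^{1/q}<\infty$. The discrete Hardy–Littlewood maximal operator is $\mathcal{M}f(k)=\sup_{n\ge k}\frac1n\sum_{j=1}^n|f(j)|$, $k\in\mathbb{Z}_+$. For $1<q<\infty$, a weight $w$ belongs to $\mathcal{A}_q$ iff $[w]_{\mathcal{A}_q}:=\sup_{n\ge1}\big(\frac1n\sum_{k=1}^n w(k)\big)\big(\frac1n\sum_{k=1}^n w(k)^{-1/(q-1)}\big)^{q-1}<\infty$. A weight $w$ belongs to $\mathcal{A}_1$ iff there is $C$ with $\mathcal{M}w(k)\le C\,w(k)$ for all $k$; $[w]_{\mathcal{A}_1}$ is the infimum of such $C$. The operator norm of an operator $S$ on $\ell^q(v)$ is $\sup\{\|Sf\|_{\ell^q(v)}:\|f\|_{\ell^q(v)}\le1\}$. *)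

theory Defs
  imports "HOL-Analysis.Analysis"
begin

text \<open>Sequences are functions nat => real; only the indices k >= 1 matter
  (the index set is Z_+ = {1,2,...}); the value at 0 is ignored everywhere.\<close>

definition weight :: "(nat \<Rightarrow> real) \<Rightarrow> bool" where
  "weight w \<longleftrightarrow> (\<forall>k\<ge>1. w k > 0)"

definition avg :: "(nat \<Rightarrow> real) \<Rightarrow> nat \<Rightarrow> real" where
  "avg f n = (\<Sum>j=1..n. f j) / real n"

definition maxop :: "(nat \<Rightarrow> real) \<Rightarrow> nat \<Rightarrow> real" where
  "maxop f k = (SUP n\<in>{max 1 k..}. avg (\<lambda>j. \<bar>f j\<bar>) n)"

definition in_lq :: "(nat \<Rightarrow> real) \<Rightarrow> real \<Rightarrow> (nat \<Rightarrow> real) \<Rightarrow> bool" where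
  "in_lq v q f \<longleftrightarrow> summable (\<lambda>k. v (Suc k) * \<bar>f (Suc k)\<bar> powr q)"

definition lq_norm :: "(nat \<Rightarrow> real) \<Rightarrow> real \<Rightarrow> (nat \<Rightarrow> real) \<Rightarrow> real" where
  "lq_norm v q f = (\<Sum>k. v (Suc k) * \<bar>f (Suc k)\<bar> powr q) powr (1 / q)"

definition op_norm :: "((nat \<Rightarrow> real) \<Rightarrow> (nat \<Rightarrow> real)) \<Rightarrow> (nat \<Rightarrow> real) \<Rightarrow> real \<Rightarrow> real" where
  "op_norm S v q = Sup {lq_norm v q (S f) | f. in_lq v q f \<and> lq_norm v q f \<le> 1}"

definition Ap_char :: "real \<Rightarrow> (nat \<Rightarrow> real) \<Rightarrow> nat \<Rightarrow> real" where
  "Ap_char q w n = avg w n * (avg (\<lambda>k. w k powr (-1 / (q - 1))) n) powr (q - 1)"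

definition in_Ap :: "real \<Rightarrow> (nat \<Rightarrow> real) \<Rightarrow> bool" where
  "in_Ap q w \<longleftrightarrow> bdd_above (Ap_char q w ` {1..})"

definition Ap_const :: "real \<Rightarrow> (nat \<Rightarrow> real) \<Rightarrow> real" where
  "Ap_const q w = (SUP n\<in>{1..}. Ap_char q w n)"

text \<open>A_1: M w(k) <= C w(k) for all k, i.e. (unfolding the sup) every average
  (1/n) sum_{j<=n} w j with n >= k is <= C w(k).\<close>
definition A1_bounds :: "(nat \<Rightarrow> real) \<Rightarrow> real set" where
  "A1_bounds w = {C. \<forall>k\<ge>1. \<forall>n\<ge>k. avg (\<lambda>j. \<bar>w j\<bar>) n \<le> C * w k}"

definition in_A1 :: "(nat \<Rightarrow> real) \<Rightarrow> bool" where
  "in_A1 w \<longleftrightarrow> A1_bounds w \<noteq> {}"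

definition A1_const :: "(nat \<Rightarrow> real) \<Rightarrow> real" where
  "A1_const w = Inf (A1_bounds w)"

definition Mprime :: "(nat \<Rightarrow> real) \<Rightarrow> (nat \<Rightarrow> real) \<Rightarrow> (nat \<Rightarrow> real)" where
  "Mprime w h = (\<lambda>k. maxop (\<lambda>j. w j * h j) k / w k)"

definition Nprime :: "real \<Rightarrow> (nat \<Rightarrow> real) \<Rightarrow> (nat \<Rightarrow> real) \<Rightarrow> (nat \<Rightarrow> real)" where
  "Nprime p w h = (\<lambda>n. \<Sum>s. (Mprime w ^^ s) h n /
      (2 ^ s * op_norm (Mprime w) w (p / (p - 1)) ^ s))"

end

theory Submission
  imports Defs
begin


lemma young0:
  fixes x y t :: real
  assumes "0 \<le> x" "0 \<le> y" "0 < t" "t < 1"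
  shows "x powr t * y powr (1 - t) \<le> t * x + (1 - t) * y"
proof (cases "x = 0 \<or> y = 0")
  case True then show ?thesis using assms by auto
next
  case False then show ?thesis using assms Youngs_inequality_0[of t "1-t" x y] by auto
qed

lemma holder_sum:
  fixes X Y :: "'a \<Rightarrow> real" and t :: real
  assumes "finite A" "\<And>j. j \<in> A \<Longrightarrow> 0 \<le> X j" "\<And>j. j \<in> A \<Longrightarrow> 0 \<le> Y j" "0 < t" "t < 1"
  shows "(\<Sum>j\<in>A. X j powr t * Y j powr (1 - t)) \<le> (\<Sum>j\<in>A. X j) powr t * (\<Sum>j\<in>A. Y j) powr (1 - t)"
proof -
  define SX where "SX = (\<Sum>j\<in>A. X j)"
  define SY where "SY = (\<Sum>j\<in>A. Y j)"
  have SX0: "SX \<ge> 0" "SY \<ge> 0" unfolding SX_def SY_def using assms by (auto intro: sum_nonneg)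
  show ?thesis
  proof (cases "SX = 0 \<or> SY = 0")
    case True
    then have "\<forall>j\<in>A. X j = 0 \<or> Y j = 0" using assms sum_nonneg_eq_0_iff unfolding SX_def SY_def by blast
    then have "(\<Sum>j\<in>A. X j powr t * Y j powr (1 - t)) = 0" by (intro sum.neutral) auto
    then show ?thesis using SX0 unfolding SX_def[symmetric] SY_def[symmetric] by simp
  next
    case False
    then have pos: "SX > 0" "SY > 0" using SX0 by auto
    have "(\<Sum>j\<in>A. X j powr t * Y j powr (1 - t))
        = (\<Sum>j\<in>A. SX powr t * SY powr (1 - t) * ((X j / SX) powr t * (Y j / SY) powr (1 - t)))"
      using pos assms by (intro sum.cong) (auto simp: powr_divide)
    also have "\<dots> \<le> (\<Sum>j\<in>A. SX powr t * SY powr (1 - t) * (t * (X j / SX) + (1 - t) * (Y j / SY)))"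
      using pos assms by (intro sum_mono mult_left_mono young0) auto
    also have "\<dots> = SX powr t * SY powr (1 - t) * (t * (\<Sum>j\<in>A. X j) / SX + (1 - t) * (\<Sum>j\<in>A. Y j) / SY)"
      by (simp add: sum_distrib_left sum.distrib sum_divide_distrib[symmetric] algebra_simps)
    also have "\<dots> = SX powr t * SY powr (1 - t)" using pos unfolding SX_def[symmetric] SY_def[symmetric] by simp
    finally show ?thesis unfolding SX_def SY_def .
  qed
qed


lemma raise_q:
  fixes a b c q :: real
  assumes "0 \<le> a" "0 \<le> b" "0 \<le> c" "0 < q" "a \<le> b powr (1/q) * c powr (1 - 1/q)"
  shows "a powr q \<le> b * c powr (q - 1)"
proof -
  have "a powr q \<le> (b powr (1/q) * c powr (1 - 1/q)) powr q"
    using assms by (intro powr_mono2) auto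
  also have "\<dots> = b powr (1/q * q) * c powr ((1 - 1/q) * q)"
    using assms by (simp add: powr_mult powr_powr)
  finally have X: "a powr q \<le> b powr (1/q * q) * c powr ((1 - 1/q) * q)" .
  have "(1 - 1/q) * q = q - 1" "1/q * q = 1" using assms by (auto simp: field_simps)
  then show ?thesis using X assms by simp
qed

lemma concave_step:
  fixes a b e :: real
  assumes "0 \<le> a" "a \<le> b" "0 < b" "0 < e" "e < 1"
  shows "(1 - e) * b powr (-e) * (b - a) \<le> b powr (1 - e) - a powr (1 - e)"
proof -
  have y: "a powr (1 - e) * b powr (1 - (1 - e)) \<le> (1 - e) * a + (1 - (1 - e)) * b"
    using assms by (intro young0) auto
  have "a powr (1 - e) = a powr (1 - e) * b powr e * b powr (-e)"
    using assms by (simp add: powr_minus field_simps)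
  also have "\<dots> \<le> ((1 - e) * a + e * b) * b powr (-e)"
    using y by (intro mult_right_mono) auto
  finally have 1: "a powr (1 - e) \<le> ((1 - e) * a + e * b) * b powr (-e)" .
  have 2: "b powr (1 - e) = b * b powr (-e)"
    using assms by (simp add: powr_diff powr_minus field_simps)
  show ?thesis using 1 2 by (simp add: algebra_simps)
qed


locale muck =
  fixes q K :: real and \<sigma> \<tau> :: "nat \<Rightarrow> real"
  assumes q: "1 < q"
  and spos: "\<And>j. 1 \<le> j \<Longrightarrow> 0 < \<sigma> j"
  and tpos: "\<And>j. 1 \<le> j \<Longrightarrow> 0 < \<tau> j"
  and dual: "\<And>j. 1 \<le> j \<Longrightarrow> \<sigma> j powr (1/q) * \<tau> j powr (1 - 1/q) = 1"
  and Acond: "\<And>n. 1 \<le> n \<Longrightarrow> (\<Sum>j=1..n. \<sigma> j) * (\<Sum>j=1..n. \<tau> j) powr (q - 1) \<le> K * real n powr q"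
begin

abbreviation "S n \<equiv> (\<Sum>j=1..n. \<sigma> j)"
abbreviation "T n \<equiv> (\<Sum>j=1..n. \<tau> j)"

lemma snn: "1 \<le> j \<Longrightarrow> 0 \<le> \<sigma> j" using spos[of j] by simp
lemma tnn: "1 \<le> j \<Longrightarrow> 0 \<le> \<tau> j" using tpos[of j] by simp

lemma S_pos: "1 \<le> n \<Longrightarrow> 0 < S n"
  using spos by (intro sum_pos) auto
lemma T_pos: "1 \<le> n \<Longrightarrow> 0 < T n"
  using tpos by (intro sum_pos) auto
lemma S_nonneg: "0 \<le> S n"
  by (intro sum_nonneg) (auto intro: snn)
lemma T_nonneg: "0 \<le> T n"
  by (intro sum_nonneg) (auto intro: tnn)
lemma S_mono: "m \<le> n \<Longrightarrow> S m \<le> S n"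
  by (intro sum_mono2) (auto intro: snn)
lemma T_mono: "m \<le> n \<Longrightarrow> T m \<le> T n"
  by (intro sum_mono2) (auto intro: tnn)

lemma K_pos: "0 < K"
proof -
  have "S 1 * T 1 powr (q - 1) \<le> K * real 1 powr q" using Acond[of 1] by simp
  moreover have "0 < S 1 * T 1 powr (q - 1)" using S_pos[of 1] T_pos[of 1] by simp
  ultimately show ?thesis by simp
qed

lemma card_holder:
  assumes "finite E" "E \<subseteq> {1..}"
  shows "real (card E) \<le> (\<Sum>j\<in>E. \<sigma> j) powr (1/q) * (\<Sum>j\<in>E. \<tau> j) powr (1 - 1/q)"
proof -
  have "real (card E) = (\<Sum>j\<in>E. \<sigma> j powr (1/q) * \<tau> j powr (1 - 1/q))"
    using dual assms by (simp add: subset_eq)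
  also have "\<dots> \<le> (\<Sum>j\<in>E. \<sigma> j) powr (1/q) * (\<Sum>j\<in>E. \<tau> j) powr (1 - 1/q)"
    using assms spos tpos q by (intro holder_sum) (auto simp: subset_eq less_imp_le)
  finally show ?thesis .
qed

lemma doubling:
  assumes "1 \<le> j"
  shows "S (2*j) \<le> K * 2 powr q * S j"
proof -
  have "real (card {1..j}) \<le> S j powr (1/q) * T j powr (1 - 1/q)"
    by (rule card_holder) auto
  then have "real j powr q \<le> S j * T j powr (q - 1)"
    using q S_nonneg T_nonneg by (intro raise_q) auto
  also have "\<dots> \<le> S j * T (2*j) powr (q - 1)"
    using q S_nonneg T_nonneg T_mono[of j "2*j"] by (intro mult_left_mono powr_mono2) auto
  finally have 1: "real j powr q \<le> S j * T (2*j) powr (q - 1)" .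
  have "S (2*j) * real j powr q \<le> S j * (S (2*j) * T (2*j) powr (q - 1))"
    using mult_left_mono[OF 1 S_nonneg[of "2*j"]] by (simp add: algebra_simps)
  also have "\<dots> \<le> S j * (K * real (2*j) powr q)"
    using Acond[of "2*j"] assms S_nonneg by (intro mult_left_mono) auto
  also have "\<dots> = (K * 2 powr q * S j) * real j powr q"
    by (simp add: powr_mult)
  finally show ?thesis using assms by simp
qed

end


context muck begin
lemma splitT: "T (2*j) = T j + (\<Sum>i\<in>{j+1..2*j}. \<tau> i)"
  using sum.ub_add_nat[of 1 j \<tau> j] by (simp add: mult_2)
lemma splitS: "S (2*j) = S j + (\<Sum>i\<in>{j+1..2*j}. \<sigma> i)"
  using sum.ub_add_nat[of 1 j \<sigma> j] by (simp add: mult_2)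

lemma growth_key:
  assumes j: "1 \<le> j"
  shows "T (2*j) \<le> (K * 2 powr q) powr (1 / (q - 1)) * (T (2*j) - T j)"
proof -
  define D where "D = T (2*j) - T j"
  have Dn: "0 \<le> D" unfolding D_def using T_mono[of j "2*j"] by simp
  have D2: "D = (\<Sum>i\<in>{j+1..2*j}. \<tau> i)" unfolding D_def using splitT[of j] by simp
  have Sn: "0 \<le> (\<Sum>i\<in>{j+1..2*j}. \<sigma> i)" by (intro sum_nonneg) (auto intro: snn)
  have "real (card {j+1..2*j}) \<le> (\<Sum>i\<in>{j+1..2*j}. \<sigma> i) powr (1/q) * (\<Sum>i\<in>{j+1..2*j}. \<tau> i) powr (1 - 1/q)"
    by (intro card_holder) auto
  then have "real j \<le> (\<Sum>i\<in>{j+1..2*j}. \<sigma> i) powr (1/q) * D powr (1 - 1/q)"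
    unfolding D2 by simp
  also have "\<dots> \<le> S (2*j) powr (1/q) * D powr (1 - 1/q)"
  proof (rule mult_right_mono)
    show "(\<Sum>i\<in>{j+1..2*j}. \<sigma> i) powr (1/q) \<le> S (2*j) powr (1/q)"
      using splitS[of j] S_nonneg[of j] Sn q by (intro powr_mono2) auto
  qed simp
  finally have 1: "real j powr q \<le> S (2*j) * D powr (q - 1)"
    using q S_nonneg Dn by (intro raise_q) auto
  have "real j powr q * T (2*j) powr (q - 1) \<le> S (2*j) * D powr (q - 1) * T (2*j) powr (q - 1)"
    using 1 by (rule mult_right_mono) simp
  also have "\<dots> = (S (2*j) * T (2*j) powr (q - 1)) * D powr (q - 1)" by (simp only: ac_simps)
  also have "\<dots> \<le> (K * real (2*j) powr q) * D powr (q - 1)"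
    using Acond[of "2*j"] j by (intro mult_right_mono) auto
  also have "\<dots> = real j powr q * (K * 2 powr q * D powr (q - 1))"
    by (simp add: powr_mult)
  finally have "real j powr q * T (2*j) powr (q - 1) \<le> real j powr q * (K * 2 powr q * D powr (q - 1))" .
  then have 2: "T (2*j) powr (q - 1) \<le> K * 2 powr q * D powr (q - 1)"
    using j by (subst (asm) mult_le_cancel_left_pos) auto
  have "(T (2*j) powr (q - 1)) powr (1/(q-1)) \<le> (K * 2 powr q * D powr (q - 1)) powr (1/(q-1))"
    using q 2 by (intro powr_mono2) auto
  also have "\<dots> = (K * 2 powr q) powr (1/(q-1)) * (D powr (q - 1)) powr (1/(q-1))"
    using K_pos Dn by (simp add: powr_mult)
  also have "(D powr (q - 1)) powr (1/(q-1)) = D"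
    using q Dn by (simp add: powr_powr)
  also have "(T (2*j) powr (q - 1)) powr (1/(q-1)) = T (2*j)"
    using q T_nonneg by (simp add: powr_powr)
  finally show ?thesis unfolding D_def .
qed

lemma growth:
  assumes "0 < \<gamma>"
  obtains \<beta> where "0 \<le> \<beta>" "\<beta> < 1" "\<And>j. 1 \<le> j \<Longrightarrow> T (2*j) powr (-\<gamma>) \<le> \<beta> * T j powr (-\<gamma>)"
proof -
  define L where "L = (K * 2 powr q) powr (1 / (q - 1))"
  have Lpos: "0 < L" unfolding L_def using K_pos by simp
  define \<alpha> where "\<alpha> = 1 - 1/L"
  have key: "T j \<le> \<alpha> * T (2*j)" if j: "1 \<le> j" for j
  proof -
    have "T (2*j) \<le> L * (T (2*j) - T j)" using growth_key[OF j] unfolding L_def .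
    then have "T (2*j) / L \<le> T (2*j) - T j" using Lpos by (simp add: field_simps)
    then show ?thesis unfolding \<alpha>_def by (simp add: algebra_simps)
  qed
  have "0 < \<alpha> * T 2" using key[of 1] T_pos[of 1] by simp
  then have apos: "0 < \<alpha>" using T_pos[of 2] by (simp add: zero_less_mult_iff)
  have alt: "\<alpha> < 1" unfolding \<alpha>_def using Lpos by simp
  show ?thesis
  proof
    show "0 \<le> \<alpha> powr \<gamma>" by simp
    show "\<alpha> powr \<gamma> < 1" using powr_less_mono2[of \<gamma> \<alpha> 1] apos alt assms by simp
    fix j :: nat assume j: "1 \<le> j"
    have "T j powr \<gamma> \<le> (\<alpha> * T (2*j)) powr \<gamma>"
      using key[OF j] assms T_nonneg by (intro powr_mono2) auto
    also have "\<dots> = \<alpha> powr \<gamma> * T (2*j) powr \<gamma>" using apos T_nonneg by (simp add: powr_mult)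
    finally have 1: "T j powr \<gamma> \<le> \<alpha> powr \<gamma> * T (2*j) powr \<gamma>" .
    have p1: "0 < T j powr \<gamma>" "0 < T (2*j) powr \<gamma>" using T_pos[of j] T_pos[of "2*j"] j by auto
    have "T (2*j) powr (-\<gamma>) = 1 / T (2*j) powr \<gamma>" by (simp add: powr_minus divide_inverse)
    also have "\<dots> \<le> \<alpha> powr \<gamma> / T j powr \<gamma>"
      using 1 p1 by (simp add: divide_simps mult.commute)
    also have "\<dots> = \<alpha> powr \<gamma> * T j powr (-\<gamma>)" by (simp add: powr_minus divide_inverse)
    finally show "T (2*j) powr (-\<gamma>) \<le> \<alpha> powr \<gamma> * T j powr (-\<gamma>)" .
  qed
qed
end

context muck begin

lemma sumI:
  assumes "0 < e" "e < 1"
  shows "(\<Sum>j=1..n. \<tau> j * T j powr (-e)) \<le> T n powr (1 - e) / (1 - e)"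
proof (induction n)
  case 0 then show ?case by simp
next
  case (Suc n)
  have Tn: "T (Suc n) = T n + \<tau> (Suc n)" by simp
  have c: "(1 - e) * T (Suc n) powr (-e) * (T (Suc n) - T n) \<le> T (Suc n) powr (1 - e) - T n powr (1 - e)"
    using assms T_nonneg[of n] T_mono[of n "Suc n"] T_pos[of "Suc n"] by (intro concave_step) auto
  then have "\<tau> (Suc n) * T (Suc n) powr (-e) \<le> (T (Suc n) powr (1 - e) - T n powr (1 - e)) / (1 - e)"
    using assms by (simp add: field_simps Tn)
  then show ?case using Suc.IH by (simp add: diff_divide_distrib)
qed

lemma hold_n:
  assumes g: "\<And>j. 1 \<le> j \<Longrightarrow> 0 \<le> g j"
  shows "(\<Sum>j=1..n. g j) powr q \<le> 2 powr (q - 1) * (\<Sum>j=1..n. g j powr q * \<sigma> j * T j powr ((q - 1)/2)) * T n powr ((q - 1)/2)"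
proof -
  define X where "X j = g j powr q * \<sigma> j * T j powr ((q - 1)/2)" for j
  define Y where "Y j = \<tau> j * T j powr (-(1/2))" for j
  have XY: "X j powr (1/q) * Y j powr (1 - 1/q) = g j" if j: "1 \<le> j" for j
  proof -
    have gj: "0 \<le> g j" using g j .
    have Tj: "0 < T j" using T_pos j .
    have "X j powr (1/q) * Y j powr (1 - 1/q)
        = (g j powr q) powr (1/q) * (\<sigma> j powr (1/q) * \<tau> j powr (1 - 1/q))
          * ((T j powr ((q - 1)/2)) powr (1/q) * (T j powr (-(1/2))) powr (1 - 1/q))"
      unfolding X_def Y_def using gj Tj spos[OF j] tpos[OF j] by (simp add: powr_mult ac_simps)
    also have "(g j powr q) powr (1/q) = g j" using q gj by (simp add: powr_powr)
    also have "\<sigma> j powr (1/q) * \<tau> j powr (1 - 1/q) = 1" using dual j .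
    also have "(T j powr ((q - 1)/2)) powr (1/q) * (T j powr (-(1/2))) powr (1 - 1/q)
             = T j powr ((q - 1)/2 * (1/q) + (-(1/2)) * (1 - 1/q))"
      by (simp only: powr_powr powr_add)
    also have "(q - 1)/2 * (1/q) + (-(1/2)) * (1 - 1/q) = 0" using q by (simp add: field_simps)
    finally show ?thesis using Tj by simp
  qed
  have Xn: "0 \<le> X j" if "1 \<le> j" for j unfolding X_def using snn[OF that] by simp
  have Yn: "0 \<le> Y j" if "1 \<le> j" for j unfolding Y_def using tnn[OF that] by simp
  have "(\<Sum>j=1..n. g j) = (\<Sum>j=1..n. X j powr (1/q) * Y j powr (1 - 1/q))"
    using XY by (intro sum.cong) auto
  also have "\<dots> \<le> (\<Sum>j=1..n. X j) powr (1/q) * (\<Sum>j=1..n. Y j) powr (1 - 1/q)"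
    using q Xn Yn by (intro holder_sum) auto
  also have "\<dots> \<le> (\<Sum>j=1..n. X j) powr (1/q) * (2 * T n powr (1/2)) powr (1 - 1/q)"
  proof (rule mult_left_mono)
    have "(\<Sum>j=1..n. Y j) \<le> T n powr (1 - 1/2) / (1 - 1/2)" unfolding Y_def by (rule sumI) auto
    then have "(\<Sum>j=1..n. Y j) \<le> 2 * T n powr (1/2)" by simp
    moreover have "0 \<le> (\<Sum>j=1..n. Y j)" using Yn by (intro sum_nonneg) auto
    ultimately show "(\<Sum>j=1..n. Y j) powr (1 - 1/q) \<le> (2 * T n powr (1/2)) powr (1 - 1/q)"
      using q by (intro powr_mono2) auto
  qed simp
  finally have "(\<Sum>j=1..n. g j) powr q \<le> (\<Sum>j=1..n. X j) * (2 * T n powr (1/2)) powr (q - 1)"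
    using q Xn g by (intro raise_q) (auto intro: sum_nonneg)
  also have "(2 * T n powr (1/2)) powr (q - 1) = 2 powr (q - 1) * T n powr ((q - 1)/2)"
    using T_nonneg[of n] by (simp add: powr_mult powr_powr)
  finally show ?thesis unfolding X_def by (simp add: ac_simps)
qed

lemma avg_bound:
  assumes g: "\<And>j. 1 \<le> j \<Longrightarrow> 0 \<le> g j" and n: "1 \<le> n"
  shows "(avg g n) powr q \<le> 2 powr (q - 1) * K * (\<Sum>j=1..n. g j powr q * \<sigma> j * T j powr ((q - 1)/2)) * T n powr (-((q - 1)/2)) / S n"
proof -
  define A where "A = (\<Sum>j=1..n. g j powr q * \<sigma> j * T j powr ((q - 1)/2))"
  have An: "0 \<le> A" unfolding A_def by (intro sum_nonneg) (auto intro!: mult_nonneg_nonneg snn)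
  have Sg: "0 \<le> (\<Sum>j=1..n. g j)" using g by (intro sum_nonneg) auto
  have Tp: "0 < T n" "0 < S n" using T_pos S_pos n by auto
  have "(avg g n) powr q = (\<Sum>j=1..n. g j) powr q / real n powr q"
    unfolding avg_def using Sg by (simp add: powr_divide)
  also have "\<dots> \<le> 2 powr (q - 1) * A * T n powr ((q - 1)/2) / real n powr q"
    using hold_n[OF g] unfolding A_def by (intro divide_right_mono) auto
  also have "T n powr ((q - 1)/2) = T n powr (q - 1) * T n powr (-((q - 1)/2))"
  proof -
    have "(q - 1)/2 = (q - 1) + (-((q - 1)/2))" by (simp add: field_simps)
    then show ?thesis by (metis powr_add)
  qed
  also have "2 powr (q - 1) * A * (T n powr (q - 1) * T n powr (-((q - 1)/2))) / real n powr q
      = 2 powr (q - 1) * A * T n powr (-((q - 1)/2)) * (T n powr (q - 1) / real n powr q)"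
    by simp
  also have "\<dots> \<le> 2 powr (q - 1) * A * T n powr (-((q - 1)/2)) * (K / S n)"
  proof (rule mult_left_mono)
    have "S n * T n powr (q - 1) \<le> K * real n powr q" using Acond n .
    then show "T n powr (q - 1) / real n powr q \<le> K / S n"
      using Tp n by (simp add: field_simps mult.commute)
  qed (use An in simp)
  finally show ?thesis unfolding A_def by (simp add: ac_simps)
qed

end


locale muck2 = muck +
  fixes \<beta> :: real
  assumes b0: "0 \<le> \<beta>" and b1: "\<beta> < 1"
  and bgrow: "\<And>j. 1 \<le> j \<Longrightarrow> T (2*j) powr (-((q - 1)/2)) \<le> \<beta> * T j powr (-((q - 1)/2))"
begin

abbreviation "\<gamma> \<equiv> (q - 1)/2"
abbreviation "C1 \<equiv> K * 2 powr q / (1 - \<beta>)"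

lemma gpos: "0 < \<gamma>" using q by simp

lemma Tpow_anti: "1 \<le> j \<Longrightarrow> j \<le> k \<Longrightarrow> T k powr (-\<gamma>) \<le> T j powr (-\<gamma>)"
  using T_pos[of j] T_mono[of j k] gpos by (intro powr_mono2') auto

lemma blk:
  assumes j: "1 \<le> j" and A: "A \<subseteq> {j..2*j}"
  shows "(\<Sum>k\<in>A. \<sigma> k / S k * T k powr (-\<gamma>)) \<le> K * 2 powr q * T j powr (-\<gamma>)"
proof -
  have fin: "finite A" using A finite_subset by blast
  have Sj: "0 < S j" using S_pos j .
  have "(\<Sum>k\<in>A. \<sigma> k / S k * T k powr (-\<gamma>)) \<le> (\<Sum>k\<in>A. \<sigma> k * (T j powr (-\<gamma>) / S j))"
  proof (rule sum_mono)
    fix k assume k: "k \<in> A"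
    then have kj: "j \<le> k" "1 \<le> k" using A j by auto
    have "\<sigma> k / S k \<le> \<sigma> k / S j"
      using S_mono[OF kj(1)] Sj snn[OF kj(2)] by (intro divide_left_mono) auto
    moreover have "T k powr (-\<gamma>) \<le> T j powr (-\<gamma>)" using Tpow_anti j kj by auto
    ultimately have "\<sigma> k / S k * T k powr (-\<gamma>) \<le> \<sigma> k / S j * T j powr (-\<gamma>)"
      using snn[OF kj(2)] Sj by (intro mult_mono) auto
    then show "\<sigma> k / S k * T k powr (-\<gamma>) \<le> \<sigma> k * (T j powr (-\<gamma>) / S j)" by simp
  qed
  also have "\<dots> = (\<Sum>k\<in>A. \<sigma> k) * (T j powr (-\<gamma>) / S j)" by (rule sum_distrib_right[symmetric])
  also have "\<dots> \<le> S (2*j) * (T j powr (-\<gamma>) / S j)"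
  proof (rule mult_right_mono)
    show "(\<Sum>k\<in>A. \<sigma> k) \<le> S (2*j)" using A j by (intro sum_mono2) (auto intro: snn)
  qed (use Sj in simp)
  also have "\<dots> \<le> (K * 2 powr q * S j) * (T j powr (-\<gamma>) / S j)"
    using doubling[OF j] Sj by (intro mult_right_mono) auto
  also have "\<dots> = K * 2 powr q * T j powr (-\<gamma>)" using Sj by simp
  finally show ?thesis .
qed

lemma blocksum:
  assumes "1 \<le> j"
  shows "(\<Sum>k=j..N. \<sigma> k / S k * T k powr (-\<gamma>)) \<le> C1 * T j powr (-\<gamma>)"
  using assms
proof (induction "Suc N - j" arbitrary: j rule: less_induct)
  case less
  have j: "1 \<le> j" using less.prems .
  have C1: "K * 2 powr q + C1 * \<beta> = C1" using b1 by (simp add: field_simps)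
  have C1ge: "K * 2 powr q \<le> C1" using b0 b1 K_pos by (simp add: field_simps)
  have Tj: "0 \<le> T j powr (-\<gamma>)" by simp
  have C1n: "0 \<le> C1" using C1ge K_pos by (smt (verit) mult_pos_pos powr_gt_zero)
  show ?case
  proof (cases "N < 2*j")
    case True
    have "(\<Sum>k=j..N. \<sigma> k / S k * T k powr (-\<gamma>)) \<le> K * 2 powr q * T j powr (-\<gamma>)"
      using True j by (intro blk) auto
    also have "\<dots> \<le> C1 * T j powr (-\<gamma>)" using C1ge Tj by (rule mult_right_mono)
    finally show ?thesis .
  next
    case False
    have eq: "{j..N} = {j..<2*j} \<union> {2*j..N}" using False by auto
    have "(\<Sum>k=j..N. \<sigma> k / S k * T k powr (-\<gamma>))
        = (\<Sum>k\<in>{j..<2*j}. \<sigma> k / S k * T k powr (-\<gamma>)) + (\<Sum>k=2*j..N. \<sigma> k / S k * T k powr (-\<gamma>))"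
      unfolding eq by (intro sum.union_disjoint) auto
    also have "\<dots> \<le> K * 2 powr q * T j powr (-\<gamma>) + C1 * T (2*j) powr (-\<gamma>)"
    proof (rule add_mono)
      show "(\<Sum>k\<in>{j..<2*j}. \<sigma> k / S k * T k powr (-\<gamma>)) \<le> K * 2 powr q * T j powr (-\<gamma>)"
        using j by (intro blk) auto
      show "(\<Sum>k=2*j..N. \<sigma> k / S k * T k powr (-\<gamma>)) \<le> C1 * T (2*j) powr (-\<gamma>)"
        using j False by (intro less.hyps) auto
    qed
    also have "\<dots> \<le> K * 2 powr q * T j powr (-\<gamma>) + C1 * (\<beta> * T j powr (-\<gamma>))"
      using bgrow[OF j] C1n by (intro add_left_mono mult_left_mono) auto
    also have "\<dots> = (K * 2 powr q + C1 * \<beta>) * T j powr (-\<gamma>)" by (simp only: distrib_right mult.assoc)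
    also have "\<dots> = C1 * T j powr (-\<gamma>)" by (simp only: C1)
    finally show ?thesis .
  qed
qed

end


lemma tri_swap:
  fixes f :: "nat \<Rightarrow> nat \<Rightarrow> real"
  shows "(\<Sum>k=1..N. \<Sum>j=1..k. f k j) = (\<Sum>j=1..N. \<Sum>k=j..N. f k j)"
proof (induction N)
  case 0 then show ?case by simp
next
  case (Suc N)
  have "(\<Sum>j=1..Suc N. \<Sum>k=j..Suc N. f k j) = (\<Sum>j=1..N. \<Sum>k=j..Suc N. f k j) + f (Suc N) (Suc N)"
    by simp
  also have "(\<Sum>j=1..N. \<Sum>k=j..Suc N. f k j) = (\<Sum>j=1..N. (\<Sum>k=j..N. f k j) + f (Suc N) j)"
    by (intro sum.cong) auto
  also have "\<dots> = (\<Sum>j=1..N. \<Sum>k=j..N. f k j) + (\<Sum>j=1..N. f (Suc N) j)"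
    by (simp add: sum.distrib)
  finally show ?case using Suc by simp
qed

context muck2 begin

lemma tail_summable:
  assumes gnn: "\<And>j. 1 \<le> j \<Longrightarrow> 0 \<le> g j" and gs: "summable (\<lambda>i. g (Suc i) powr q * \<sigma> (Suc i))"
  and k: "1 \<le> k"
  shows "summable (\<lambda>j. if k < j then g j powr q * \<sigma> j / S j else 0)"
proof -
  define a' where "a' j = (if 1 \<le> j then g j powr q * \<sigma> j else 0)" for j
  have "summable (\<lambda>i. a' (Suc i))" using gs unfolding a'_def by simp
  then have sa: "summable a'" by (simp add: summable_Suc_iff)
  show ?thesis
  proof (rule summable_comparison_test'[of "\<lambda>j. a' j / S 1" 0])
    show "summable (\<lambda>j. a' j / S 1)" using sa by (rule summable_divide)
    fix j :: nat
    show "norm (if k < j then g j powr q * \<sigma> j / S j else 0) \<le> a' j / S 1"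
    proof (cases "k < j")
      case True
      then have j: "1 \<le> j" using k by simp
      have an: "0 \<le> g j powr q * \<sigma> j" using snn[OF j] by simp
      have "g j powr q * \<sigma> j / S j \<le> g j powr q * \<sigma> j / S 1"
        using S_pos[of 1] S_mono[OF j] an by (intro divide_left_mono) auto
      then show ?thesis using True j an S_pos[OF j] unfolding a'_def by simp
    next
      case False
      then show ?thesis unfolding a'_def using snn S_pos[of 1] by simp
    qed
  qed
qed

end


context muck2 begin

abbreviation "tail g k \<equiv> (\<Sum>j. if k < j then g j powr q * \<sigma> j / S j else 0)"
abbreviation "Bd g k \<equiv> (\<Sum>j=1..k. g j powr q * \<sigma> j * T j powr \<gamma>) * T k powr (-\<gamma>) / S k + tail g k"

lemma Jb:
  assumes gnn: "\<And>j. 1 \<le> j \<Longrightarrow> 0 \<le> g j" and gs: "summable (\<lambda>i. g (Suc i) powr q * \<sigma> (Suc i))"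
  and k: "1 \<le> k" and kn: "k \<le> n"
  shows "(\<Sum>j=1..n. g j powr q * \<sigma> j * T j powr \<gamma>) * T n powr (-\<gamma>) / S n \<le> Bd g k"
proof -
  define P where "P j = g j powr q * \<sigma> j * T j powr \<gamma>" for j
  have Pn: "0 \<le> P j" if "1 \<le> j" for j unfolding P_def using snn[OF that] by simp
  have n: "1 \<le> n" using k kn by simp
  have Sn: "0 < S n" "0 < S k" using S_pos n k by auto
  have eq: "{1..n} = {1..k} \<union> {Suc k..n}" using kn by auto
  have "(\<Sum>j=1..n. P j) = (\<Sum>j=1..k. P j) + (\<Sum>j=Suc k..n. P j)"
    unfolding eq by (intro sum.union_disjoint) auto
  moreover have e2: "(\<Sum>j=Suc k..n. P j) * T n powr (-\<gamma>) / S n = (\<Sum>j=Suc k..n. P j * T n powr (-\<gamma>) / S n)"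
    by (simp add: sum_distrib_right sum_divide_distrib)
  ultimately have "(\<Sum>j=1..n. P j) * T n powr (-\<gamma>) / S n
      = (\<Sum>j=1..k. P j) * T n powr (-\<gamma>) / S n + (\<Sum>j=Suc k..n. P j * T n powr (-\<gamma>) / S n)"
    unfolding e2[symmetric] by (simp add: distrib_right add_divide_distrib)
  also have "\<dots> \<le> (\<Sum>j=1..k. P j) * T k powr (-\<gamma>) / S k + tail g k"
  proof (rule add_mono)
    have P1: "0 \<le> (\<Sum>j=1..k. P j)" using Pn by (intro sum_nonneg) auto
    have "T n powr (-\<gamma>) / S n \<le> T k powr (-\<gamma>) / S k"
      using Tpow_anti[OF k kn] Sn S_mono[OF kn] by (intro frac_le) auto
    then show "(\<Sum>j=1..k. P j) * T n powr (-\<gamma>) / S n \<le> (\<Sum>j=1..k. P j) * T k powr (-\<gamma>) / S k"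
      using P1 by (metis mult_left_mono times_divide_eq_right)
    have "(\<Sum>j=Suc k..n. P j * T n powr (-\<gamma>) / S n) \<le> (\<Sum>j=Suc k..n. if k < j then g j powr q * \<sigma> j / S j else 0)"
    proof (rule sum_mono)
      fix j assume j: "j \<in> {Suc k..n}"
      then have j1: "1 \<le> j" "j \<le> n" "k < j" using k by auto
      have Tj: "0 < T j" "0 < S j" using T_pos S_pos j1 by auto
      have aj: "0 \<le> g j powr q * \<sigma> j" using snn[OF j1(1)] by simp
      have "T j powr \<gamma> \<le> T n powr \<gamma>" using T_mono[OF j1(2)] Tj gpos by (intro powr_mono2) auto
      then have 1: "T j powr \<gamma> * T n powr (-\<gamma>) \<le> 1"
        using Tj T_mono[OF j1(2)] by (simp add: powr_minus divide_simps)
      have "P j * T n powr (-\<gamma>) / S n = g j powr q * \<sigma> j * (T j powr \<gamma> * T n powr (-\<gamma>)) / S n"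
        unfolding P_def by (simp add: ac_simps)
      also have "\<dots> \<le> g j powr q * \<sigma> j * 1 / S n"
        using 1 aj Sn by (intro divide_right_mono mult_left_mono) auto
      also have "\<dots> \<le> g j powr q * \<sigma> j / S j"
        using aj Tj S_mono[OF j1(2)] by (simp add: divide_left_mono)
      finally show "P j * T n powr (-\<gamma>) / S n \<le> (if k < j then g j powr q * \<sigma> j / S j else 0)"
        using j1 by simp
    qed
    also have "\<dots> \<le> tail g k"
      using tail_summable[OF gnn gs k] snn S_pos
      by (intro sum_le_suminf) (auto intro!: divide_nonneg_pos mult_nonneg_nonneg)
    finally show "(\<Sum>j=Suc k..n. P j * T n powr (-\<gamma>) / S n) \<le> tail g k" .
  qed
  finally show ?thesis unfolding P_def .
qed

end


lemma root_le:
  fixes x y q :: real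
  assumes "0 \<le> x" "x powr q \<le> y" "0 < q"
  shows "x \<le> y powr (1/q)"
proof -
  have "x = (x powr q) powr (1/q)" using assms by (simp add: powr_powr)
  also have "\<dots> \<le> y powr (1/q)" using assms by (intro powr_mono2) auto
  finally show ?thesis .
qed

context muck2 begin

lemma avg_nonneg: "(\<And>j. 1 \<le> j \<Longrightarrow> 0 \<le> g j) \<Longrightarrow> 0 \<le> avg g n"
  unfolding avg_def by (intro divide_nonneg_nonneg sum_nonneg) auto

lemma Mb:
  assumes gnn: "\<And>j. 1 \<le> j \<Longrightarrow> 0 \<le> g j" and gs: "summable (\<lambda>i. g (Suc i) powr q * \<sigma> (Suc i))"
  and k: "1 \<le> k"
  shows "bdd_above (avg g ` {k..})" "0 \<le> (SUP n\<in>{k..}. avg g n)"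
    "(SUP n\<in>{k..}. avg g n) powr q \<le> 2 powr (q - 1) * K * Bd g k"
proof -
  have each: "avg g n \<le> (2 powr (q - 1) * K * Bd g k) powr (1/q)" if n: "n \<in> {k..}" for n
  proof (rule root_le)
    show "0 \<le> avg g n" using avg_nonneg gnn by blast
    have "(avg g n) powr q \<le> 2 powr (q - 1) * K * (\<Sum>j=1..n. g j powr q * \<sigma> j * T j powr \<gamma>) * T n powr (-\<gamma>) / S n"
      using avg_bound[of g n, OF gnn] n k by simp
    also have "\<dots> = 2 powr (q - 1) * K * ((\<Sum>j=1..n. g j powr q * \<sigma> j * T j powr \<gamma>) * T n powr (-\<gamma>) / S n)"
      by simp
    also have "\<dots> \<le> 2 powr (q - 1) * K * Bd g k"
      using Jb[of g k n, OF gnn gs k] n K_pos by (intro mult_left_mono) auto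
    finally show "(avg g n) powr q \<le> 2 powr (q - 1) * K * Bd g k" .
  qed (use q in simp)
  show bdd: "bdd_above (avg g ` {k..})" using each by (intro bdd_aboveI2) 
  have "avg g k \<le> (SUP n\<in>{k..}. avg g n)" using bdd by (intro cSUP_upper) auto
  then show nn: "0 \<le> (SUP n\<in>{k..}. avg g n)" using avg_nonneg[of g k, OF gnn] by simp
  have "(SUP n\<in>{k..}. avg g n) \<le> (2 powr (q - 1) * K * Bd g k) powr (1/q)"
    using each by (intro cSUP_least) auto
  then have "(SUP n\<in>{k..}. avg g n) powr q \<le> ((2 powr (q - 1) * K * Bd g k) powr (1/q)) powr q"
    using nn q by (intro powr_mono2) auto
  also have "\<dots> \<le> 2 powr (q - 1) * K * Bd g k"
  proof -
    have "0 \<le> (avg g k) powr q" by simp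
    also have "\<dots> \<le> 2 powr (q - 1) * K * Bd g k"
    proof -
      have "avg g k \<le> (2 powr (q - 1) * K * Bd g k) powr (1/q)" using each by simp
      then have "0 \<le> (2 powr (q - 1) * K * Bd g k) powr (1/q)" using avg_nonneg[of g k, OF gnn] by simp
      have "(avg g k) powr q \<le> 2 powr (q - 1) * K * ((\<Sum>j=1..k. g j powr q * \<sigma> j * T j powr \<gamma>) * T k powr (-\<gamma>) / S k)"
        using avg_bound[of g k, OF gnn k] by simp
      also have "\<dots> \<le> 2 powr (q - 1) * K * Bd g k"
        using Jb[of g k k, OF gnn gs k] K_pos by (intro mult_left_mono) auto
      finally show ?thesis .
    qed
    finally have "0 \<le> 2 powr (q - 1) * K * Bd g k" .
    then show ?thesis using q by (simp add: powr_powr)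
  qed
  finally show "(SUP n\<in>{k..}. avg g n) powr q \<le> 2 powr (q - 1) * K * Bd g k" .
qed

end


context muck2 begin

lemma partial_le_A:
  assumes gs: "summable (\<lambda>i. g (Suc i) powr q * \<sigma> (Suc i))"
  shows "(\<Sum>j=1..N. g j powr q * \<sigma> j) \<le> (\<Sum>i. g (Suc i) powr q * \<sigma> (Suc i))"
proof -
  have "(\<Sum>j=1..N. g j powr q * \<sigma> j) = (\<Sum>i<N. g (Suc i) powr q * \<sigma> (Suc i))"
    using sum.atLeast1_atMost_eq[of "\<lambda>j. g j powr q * \<sigma> j" N] by simp
  also have "\<dots> \<le> (\<Sum>i. g (Suc i) powr q * \<sigma> (Suc i))"
    using gs snn by (intro sum_le_suminf) auto
  finally show ?thesis .
qed

lemma first_part: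
  assumes gs: "summable (\<lambda>i. g (Suc i) powr q * \<sigma> (Suc i))"
  shows "(\<Sum>k=1..N. \<sigma> k * ((\<Sum>j=1..k. g j powr q * \<sigma> j * T j powr \<gamma>) * T k powr (-\<gamma>) / S k))
     \<le> C1 * (\<Sum>i. g (Suc i) powr q * \<sigma> (Suc i))"
proof -
  define P where "P j = g j powr q * \<sigma> j * T j powr \<gamma>" for j
  define E where "E k = \<sigma> k / S k * T k powr (-\<gamma>)" for k
  have "(\<Sum>k=1..N. \<sigma> k * ((\<Sum>j=1..k. P j) * T k powr (-\<gamma>) / S k)) = (\<Sum>k=1..N. \<Sum>j=1..k. P j * E k)"
    unfolding E_def by (intro sum.cong refl) (simp add: sum_distrib_left sum_distrib_right sum_divide_distrib ac_simps)
  also have "\<dots> = (\<Sum>j=1..N. \<Sum>k=j..N. P j * E k)" by (rule tri_swap)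
  also have "\<dots> = (\<Sum>j=1..N. P j * (\<Sum>k=j..N. E k))" by (simp add: sum_distrib_left)
  also have "\<dots> \<le> (\<Sum>j=1..N. P j * (C1 * T j powr (-\<gamma>)))"
  proof (rule sum_mono)
    fix j assume j: "j \<in> {1..N}"
    then have "0 \<le> P j" unfolding P_def using snn[of j] by simp
    then show "P j * (\<Sum>k=j..N. E k) \<le> P j * (C1 * T j powr (-\<gamma>))"
      unfolding E_def using blocksum[of j N] j by (intro mult_left_mono) auto
  qed
  also have "\<dots> = C1 * (\<Sum>j=1..N. g j powr q * \<sigma> j)"
  proof -
    have "P j * (C1 * T j powr (-\<gamma>)) = C1 * (g j powr q * \<sigma> j)" if "j \<in> {1..N}" for j
    proof -
      have "0 < T j" using T_pos that by auto
      then have "T j powr \<gamma> * T j powr (-\<gamma>) = 1" by (simp add: powr_add[symmetric])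
      then show ?thesis unfolding P_def by (metis (no_types, lifting) mult.assoc mult.commute mult.right_neutral)
    qed
    then have "(\<Sum>j=1..N. P j * (C1 * T j powr (-\<gamma>))) = (\<Sum>j=1..N. C1 * (g j powr q * \<sigma> j))"
      by (intro sum.cong) auto
    also have "\<dots> = C1 * (\<Sum>j=1..N. g j powr q * \<sigma> j)" by (rule sum_distrib_left[symmetric])
    finally show ?thesis .
  qed
  also have "\<dots> \<le> C1 * (\<Sum>i. g (Suc i) powr q * \<sigma> (Suc i))"
  proof (rule mult_left_mono)
    show "(\<Sum>j=1..N. g j powr q * \<sigma> j) \<le> (\<Sum>i. g (Suc i) powr q * \<sigma> (Suc i))" using partial_le_A[OF gs] .
    have "0 < K * 2 powr q" using K_pos by simp
    then show "0 \<le> C1" using b1 by simp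
  qed
  finally show ?thesis unfolding P_def .
qed

lemma second_part:
  assumes gnn: "\<And>j. 1 \<le> j \<Longrightarrow> 0 \<le> g j" and gs: "summable (\<lambda>i. g (Suc i) powr q * \<sigma> (Suc i))"
  shows "(\<Sum>k=1..N. \<sigma> k * tail g k) \<le> (\<Sum>i. g (Suc i) powr q * \<sigma> (Suc i))"
proof -
  define a' where "a' j = (if 1 \<le> j then g j powr q * \<sigma> j else 0)" for j
  have "summable (\<lambda>i. a' (Suc i))" using gs unfolding a'_def by simp
  then have sa: "summable a'" by (simp add: summable_Suc_iff)
  have A: "suminf a' = (\<Sum>i. g (Suc i) powr q * \<sigma> (Suc i))"
    using suminf_split_head[OF sa] unfolding a'_def by simp
  define t where "t k j = (if k < j then g j powr q * \<sigma> j / S j else 0)" for k j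
  have ts: "summable (t k)" if "k \<in> {1..N}" for k unfolding t_def using tail_summable[OF gnn gs] that by auto
  have "(\<Sum>k=1..N. \<sigma> k * tail g k) = (\<Sum>k=1..N. \<Sum>j. \<sigma> k * t k j)"
    unfolding t_def by (intro sum.cong refl suminf_mult[symmetric] tail_summable[OF gnn gs]) auto
  also have "\<dots> = (\<Sum>j. \<Sum>k=1..N. \<sigma> k * t k j)"
    using ts by (intro suminf_sum[symmetric] summable_mult) auto
  also have "\<dots> \<le> suminf a'"
  proof (rule suminf_le)
    show "summable (\<lambda>j. \<Sum>k=1..N. \<sigma> k * t k j)" using ts by (intro summable_sum summable_mult) auto
    show "summable a'" by (rule sa)
    fix j
    show "(\<Sum>k=1..N. \<sigma> k * t k j) \<le> a' j"
    proof (cases "1 \<le> j")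
      case False then show ?thesis unfolding t_def a'_def by simp
    next
      case True
      have aj: "0 \<le> g j powr q * \<sigma> j" using snn[OF True] by simp
      have Sj: "0 < S j" using S_pos True .
      have "(\<Sum>k=1..N. \<sigma> k * t k j) = (\<Sum>k\<in>{1..N}. (if k < j then \<sigma> k else 0) * (g j powr q * \<sigma> j / S j))"
        unfolding t_def by (intro sum.cong refl) auto
      also have "\<dots> = (\<Sum>k\<in>{1..N}. if k < j then \<sigma> k else 0) * (g j powr q * \<sigma> j / S j)"
        by (rule sum_distrib_right[symmetric])
      also have "(\<Sum>k\<in>{1..N}. if k < j then \<sigma> k else 0) = (\<Sum>k\<in>{1..N} \<inter> {..<j}. \<sigma> k)"
        by (simp add: sum.inter_restrict)
      also have "\<dots> \<le> S j" by (intro sum_mono2) (auto intro: snn)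
      finally have "(\<Sum>k=1..N. \<sigma> k * t k j) \<le> S j * (g j powr q * \<sigma> j / S j)"
        using aj Sj by (smt (verit) divide_nonneg_pos mult_right_mono)
      then show ?thesis using Sj True unfolding a'_def by simp
    qed
  qed
  finally show ?thesis using A by simp
qed

end


context muck2 begin

lemma strong:
  assumes gnn: "\<And>j. 1 \<le> j \<Longrightarrow> 0 \<le> g j" and gs: "summable (\<lambda>i. g (Suc i) powr q * \<sigma> (Suc i))"
  shows "summable (\<lambda>i. \<sigma> (Suc i) * (SUP n\<in>{Suc i..}. avg g n) powr q)"
    "(\<Sum>i. \<sigma> (Suc i) * (SUP n\<in>{Suc i..}. avg g n) powr q) \<le> 2 powr (q - 1) * K * (C1 + 1) * (\<Sum>i. g (Suc i) powr q * \<sigma> (Suc i))"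
proof -
  define A where "A = (\<Sum>i. g (Suc i) powr q * \<sigma> (Suc i))"
  define M where "M k = (SUP n\<in>{k..}. avg g n)" for k
  have part: "(\<Sum>k=1..N. \<sigma> k * M k powr q) \<le> 2 powr (q - 1) * K * (C1 + 1) * A" for N
  proof -
    have "(\<Sum>k=1..N. \<sigma> k * M k powr q) \<le> (\<Sum>k=1..N. \<sigma> k * (2 powr (q - 1) * K * Bd g k))"
      unfolding M_def using Mb(3)[OF gnn gs] snn by (intro sum_mono mult_left_mono) auto
    also have "\<dots> = 2 powr (q - 1) * K * ((\<Sum>k=1..N. \<sigma> k * ((\<Sum>j=1..k. g j powr q * \<sigma> j * T j powr \<gamma>) * T k powr (-\<gamma>) / S k))
        + (\<Sum>k=1..N. \<sigma> k * tail g k))"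
      by (simp add: sum_distrib_left distrib_left sum.distrib ac_simps)
    also have "\<dots> \<le> 2 powr (q - 1) * K * (C1 * A + A)"
      unfolding A_def using first_part[OF gs, of N] second_part[OF gnn gs, of N] K_pos
      by (intro mult_left_mono add_mono) auto
    finally show ?thesis by (simp add: algebra_simps)
  qed
  have eqN: "(\<Sum>i<N. \<sigma> (Suc i) * M (Suc i) powr q) = (\<Sum>k=1..N. \<sigma> k * M k powr q)" for N
    using sum.atLeast1_atMost_eq[of "\<lambda>k. \<sigma> k * M k powr q" N] by simp
  show s: "summable (\<lambda>i. \<sigma> (Suc i) * (SUP n\<in>{Suc i..}. avg g n) powr q)"
    using part eqN snn unfolding M_def[symmetric] by (intro summableI_nonneg_bounded) auto
  show "(\<Sum>i. \<sigma> (Suc i) * (SUP n\<in>{Suc i..}. avg g n) powr q) \<le> 2 powr (q - 1) * K * (C1 + 1) * (\<Sum>i. g (Suc i) powr q * \<sigma> (Suc i))"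
    using s part eqN unfolding M_def[symmetric] A_def[symmetric] by (intro suminf_le_const) auto
qed

end

context muck begin

lemma strong_ex:
  obtains C where "0 \<le> C"
    "\<And>g. (\<And>j. 1 \<le> j \<Longrightarrow> 0 \<le> g j) \<Longrightarrow> summable (\<lambda>i. g (Suc i) powr q * \<sigma> (Suc i)) \<Longrightarrow>
       (\<forall>k\<ge>1. bdd_above (avg g ` {k..})) \<and>
       summable (\<lambda>i. \<sigma> (Suc i) * (SUP n\<in>{Suc i..}. avg g n) powr q) \<and>
       (\<Sum>i. \<sigma> (Suc i) * (SUP n\<in>{Suc i..}. avg g n) powr q) \<le> C * (\<Sum>i. g (Suc i) powr q * \<sigma> (Suc i))"
proof -
  have g0: "0 < (q - 1) / 2" using q by simp
  obtain \<beta> where b: "0 \<le> \<beta>" "\<beta> < 1" "\<And>j. 1 \<le> j \<Longrightarrow> T (2*j) powr (-((q - 1)/2)) \<le> \<beta> * T j powr (-((q - 1)/2))"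
    by (rule growth[OF g0]) blast
  interpret m2: muck2 q K \<sigma> \<tau> \<beta> using b by unfold_locales auto
  show ?thesis
  proof (rule that[of "2 powr (q - 1) * K * (K * 2 powr q / (1 - \<beta>) + 1)"])
    show "0 \<le> 2 powr (q - 1) * K * (K * 2 powr q / (1 - \<beta>) + 1)" using K_pos b by simp
    fix g :: "nat \<Rightarrow> real"
    assume gnn: "\<And>j. 1 \<le> j \<Longrightarrow> 0 \<le> g j" and gs: "summable (\<lambda>i. g (Suc i) powr q * \<sigma> (Suc i))"
    show "(\<forall>k\<ge>1. bdd_above (avg g ` {k..})) \<and>
       summable (\<lambda>i. \<sigma> (Suc i) * (SUP n\<in>{Suc i..}. avg g n) powr q) \<and>
       (\<Sum>i. \<sigma> (Suc i) * (SUP n\<in>{Suc i..}. avg g n) powr q) \<le> 2 powr (q - 1) * K * (K * 2 powr q / (1 - \<beta>) + 1) * (\<Sum>i. g (Suc i) powr q * \<sigma> (Suc i))"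
      using m2.Mb(1)[OF gnn gs] m2.strong[OF gnn gs] by auto
  qed
qed

end


lemma pw1:
  fixes w x p :: real
  assumes "0 < w" "0 \<le> x" "1 < p"
  shows "w * (x / w) powr (p/(p-1)) = w powr (-1/(p-1)) * x powr (p/(p-1))"
proof -
  have "w * (x / w) powr (p/(p-1)) = x powr (p/(p-1)) * (w powr 1 / w powr (p/(p-1)))"
    using assms by (simp add: powr_divide)
  also have "w powr 1 / w powr (p/(p-1)) = w powr (1 - p/(p-1))" using assms by (simp add: powr_diff)
  also have "1 - p/(p-1) = -1/(p-1)" using assms by (simp add: field_simps)
  finally show ?thesis by simp
qed

lemma pw2:
  fixes w f p :: real
  assumes "0 < w" "1 < p"
  shows "\<bar>w * f\<bar> powr (p/(p-1)) * w powr (-1/(p-1)) = w * \<bar>f\<bar> powr (p/(p-1))"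
proof -
  have "\<bar>w * f\<bar> powr (p/(p-1)) * w powr (-1/(p-1)) = \<bar>f\<bar> powr (p/(p-1)) * (w powr (p/(p-1)) * w powr (-1/(p-1)))"
    using assms by (simp add: abs_mult powr_mult)
  also have "w powr (p/(p-1)) * w powr (-1/(p-1)) = w powr (p/(p-1) + -1/(p-1))" by (rule powr_add[symmetric])
  also have "p/(p-1) + -1/(p-1) = 1"
  proof -
    have "p/(p-1) + -1/(p-1) = (p + -1)/(p-1)" by (rule add_divide_distrib[symmetric])
    then show ?thesis using assms by simp
  qed
  finally show ?thesis using assms by simp
qed

lemma Acond_w:
  fixes p :: real and w :: "nat \<Rightarrow> real"
  assumes p: "1 < p" and w: "weight w" and Ap: "in_Ap p w" and n: "1 \<le> n"
  shows "(\<Sum>j=1..n. w j powr (-1/(p-1))) * (\<Sum>j=1..n. w j) powr (p/(p-1) - 1)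
         \<le> Ap_const p w powr (1/(p-1)) * real n powr (p/(p-1))"
proof -
  define S where "S = (\<Sum>j=1..n. w j powr (-1/(p-1)))"
  define T where "T = (\<Sum>j=1..n. w j)"
  have wp: "\<And>j. 1 \<le> j \<Longrightarrow> 0 < w j" using w unfolding weight_def by auto
  have wne: "\<And>j. 1 \<le> j \<Longrightarrow> w j \<noteq> 0" using wp by force
  have Sp: "0 < S" unfolding S_def using n wne by (intro sum_pos) auto
  have Tp: "0 < T" unfolding T_def using n wp by (intro sum_pos) auto
  have np: "0 < real n" using n by simp
  have "Ap_char p w n \<le> Ap_const p w"
    unfolding Ap_const_def using Ap n unfolding in_Ap_def by (intro cSUP_upper) auto
  then have 1: "(T / n) * (S / n) powr (p - 1) \<le> Ap_const p w"
    unfolding Ap_char_def avg_def S_def T_def by simp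
  have "((T / n) * (S / n) powr (p - 1)) powr (1/(p-1)) \<le> Ap_const p w powr (1/(p-1))"
    using 1 p Tp Sp np by (intro powr_mono2) auto
  moreover have "((T / n) * (S / n) powr (p - 1)) powr (1/(p-1)) = (T / n) powr (1/(p-1)) * (S / n)"
  proof -
    have "((T / n) * (S / n) powr (p - 1)) powr (1/(p-1)) = (T / n) powr (1/(p-1)) * ((S / n) powr (p - 1)) powr (1/(p-1))"
      using Tp np by (intro powr_mult)
    also have "((S / n) powr (p - 1)) powr (1/(p-1)) = (S / n) powr ((p - 1) * (1/(p-1)))" by (rule powr_powr)
    also have "(p - 1) * (1/(p-1)) = 1" using p by simp
    finally show ?thesis using Sp np by simp
  qed
  ultimately have 2: "(T / n) powr (1/(p-1)) * (S / n) \<le> Ap_const p w powr (1/(p-1))" by simp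
  have "S * T powr (p/(p-1) - 1) = ((T / n) powr (1/(p-1)) * (S / n)) * real n powr (p/(p-1))"
  proof -
    have e: "p/(p-1) - 1 = 1/(p-1)" "p/(p-1) = 1/(p-1) + 1" using p by (auto simp: field_simps)
    have "((T / n) powr (1/(p-1)) * (S / n)) * real n powr (p/(p-1))
        = (T powr (1/(p-1)) / real n powr (1/(p-1))) * (S / n) * (real n powr (1/(p-1)) * real n)"
      using Tp np unfolding e(2) by (simp add: powr_divide powr_add)
    also have "\<dots> = S * T powr (1/(p-1))" using np by (simp add: field_simps)
    finally show ?thesis unfolding e(1) by simp
  qed
  also have "\<dots> \<le> Ap_const p w powr (1/(p-1)) * real n powr (p/(p-1))"
    using 2 by (intro mult_right_mono) auto
  finally show ?thesis unfolding S_def T_def .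
qed


lemma Mprime_eq:
  assumes "1 \<le> k"
  shows "Mprime w f k = (SUP n\<in>{k..}. avg (\<lambda>j. \<bar>w j * f j\<bar>) n) / w k"
  using assms unfolding Mprime_def maxop_def by (simp add: max_def)

lemma Mprime_bound:
  fixes p :: real and w :: "nat \<Rightarrow> real"
  assumes p: "1 < p" and w: "weight w" and Ap: "in_Ap p w"
  obtains C where "0 \<le> C" "\<And>f. in_lq w (p/(p-1)) f \<Longrightarrow>
     (\<forall>k\<ge>1. bdd_above (avg (\<lambda>j. \<bar>w j * f j\<bar>) ` {k..})) \<and> in_lq w (p/(p-1)) (Mprime w f) \<and>
     (\<Sum>k. w (Suc k) * \<bar>Mprime w f (Suc k)\<bar> powr (p/(p-1))) \<le> C * (\<Sum>k. w (Suc k) * \<bar>f (Suc k)\<bar> powr (p/(p-1)))"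
proof -
  define q where "q = p/(p-1)"
  define \<sigma> where "\<sigma> j = w j powr (-1/(p-1))" for j
  define K where "K = Ap_const p w powr (1/(p-1))"
  have wp: "\<And>j. 1 \<le> j \<Longrightarrow> 0 < w j" using w unfolding weight_def by auto
  interpret m: muck q K \<sigma> w
  proof
    show "1 < q" unfolding q_def using p by simp
    show "0 < \<sigma> j" if "1 \<le> j" for j
    proof -
      have "0 < w j" using wp that .
      then show ?thesis unfolding \<sigma>_def by simp
    qed
    show "\<And>j. 1 \<le> j \<Longrightarrow> 0 < w j" by (rule wp)
    fix j :: nat assume j: "1 \<le> j"
    have "\<sigma> j powr (1/q) * w j powr (1 - 1/q) = w j powr ((-1/(p-1)) * (1/q)) * w j powr (1 - 1/q)"
      unfolding \<sigma>_def by (simp add: powr_powr)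
    also have "\<dots> = w j powr ((-1/(p-1)) * (1/q) + (1 - 1/q))" by (rule powr_add[symmetric])
    also have "(-1/(p-1)) * (1/q) + (1 - 1/q) = 0" unfolding q_def using p by (simp add: field_simps)
    finally show "\<sigma> j powr (1/q) * w j powr (1 - 1/q) = 1" using wp[OF j] by simp
  next
    fix n :: nat assume "1 \<le> n"
    then show "(\<Sum>j=1..n. \<sigma> j) * (\<Sum>j=1..n. w j) powr (q - 1) \<le> K * real n powr q"
      unfolding q_def \<sigma>_def K_def using Acond_w[OF p w Ap] by simp
  qed
  obtain C where C0: "0 \<le> C" and C: "\<And>g. (\<And>j. 1 \<le> j \<Longrightarrow> 0 \<le> g j) \<Longrightarrow> summable (\<lambda>i. g (Suc i) powr q * \<sigma> (Suc i)) \<Longrightarrow>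
       (\<forall>k\<ge>1. bdd_above (avg g ` {k..})) \<and>
       summable (\<lambda>i. \<sigma> (Suc i) * (SUP n\<in>{Suc i..}. avg g n) powr q) \<and>
       (\<Sum>i. \<sigma> (Suc i) * (SUP n\<in>{Suc i..}. avg g n) powr q) \<le> C * (\<Sum>i. g (Suc i) powr q * \<sigma> (Suc i))"
    by (rule m.strong_ex) blast
  show ?thesis
  proof (rule that[OF C0])
    fix f assume f: "in_lq w (p/(p-1)) f"
    define g where "g j = \<bar>w j * f j\<bar>" for j
    have e1: "g (Suc i) powr q * \<sigma> (Suc i) = w (Suc i) * \<bar>f (Suc i)\<bar> powr q" for i
      unfolding g_def \<sigma>_def q_def using pw2[OF wp[of "Suc i"] p] by simp
    have gs: "summable (\<lambda>i. g (Suc i) powr q * \<sigma> (Suc i))"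
    proof -
      have "summable (\<lambda>i. w (Suc i) * \<bar>f (Suc i)\<bar> powr q)" using f unfolding in_lq_def q_def .
      then show ?thesis unfolding e1 .
    qed
    have R: "(\<forall>k\<ge>1. bdd_above (avg g ` {k..})) \<and>
       summable (\<lambda>i. \<sigma> (Suc i) * (SUP n\<in>{Suc i..}. avg g n) powr q) \<and>
       (\<Sum>i. \<sigma> (Suc i) * (SUP n\<in>{Suc i..}. avg g n) powr q) \<le> C * (\<Sum>i. g (Suc i) powr q * \<sigma> (Suc i))"
      using C[OF _ gs] unfolding g_def by auto
    have e2: "w (Suc i) * \<bar>Mprime w f (Suc i)\<bar> powr q = \<sigma> (Suc i) * (SUP n\<in>{Suc i..}. avg g n) powr q" for i
    proof -
      have "avg g (Suc i) \<le> (SUP n\<in>{Suc i..}. avg g n)" using R by (intro cSUP_upper) auto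
      moreover have "0 \<le> avg g (Suc i)" unfolding avg_def g_def by (intro divide_nonneg_nonneg sum_nonneg) auto
      ultimately have sp: "0 \<le> (SUP n\<in>{Suc i..}. avg g n)" by simp
      have "Mprime w f (Suc i) = (SUP n\<in>{Suc i..}. avg g n) / w (Suc i)"
        unfolding g_def by (rule Mprime_eq) simp
      then show ?thesis unfolding q_def \<sigma>_def using pw1[OF wp[of "Suc i"] sp p] sp wp[of "Suc i"] by simp
    qed
    show "(\<forall>k\<ge>1. bdd_above (avg (\<lambda>j. \<bar>w j * f j\<bar>) ` {k..})) \<and> in_lq w (p/(p-1)) (Mprime w f) \<and>
     (\<Sum>k. w (Suc k) * \<bar>Mprime w f (Suc k)\<bar> powr (p/(p-1))) \<le> C * (\<Sum>k. w (Suc k) * \<bar>f (Suc k)\<bar> powr (p/(p-1)))"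
    proof -
      have gg: "(\<lambda>j. \<bar>w j * f j\<bar>) = g" unfolding g_def by simp
      show ?thesis unfolding gg in_lq_def q_def[symmetric] e2 using R unfolding e1 by simp
    qed
  qed
qed


lemma SUP_div:
  fixes f :: "nat \<Rightarrow> real"
  assumes t: "0 < t" and A: "A \<noteq> {}" and b: "bdd_above (f ` A)"
  shows "(SUP x\<in>A. f x / t) = (SUP x\<in>A. f x) / t"
proof (rule antisym)
  show "(SUP x\<in>A. f x / t) \<le> (SUP x\<in>A. f x) / t"
    using A b t by (intro cSUP_least divide_right_mono cSUP_upper) auto
  have b2: "bdd_above ((\<lambda>x. f x / t) ` A)"
  proof -
    obtain M where "\<And>x. x \<in> A \<Longrightarrow> f x \<le> M" using b by (auto simp: bdd_above_def)
    then have "\<And>x. x \<in> A \<Longrightarrow> f x / t \<le> M / t" using t by (simp add: divide_right_mono)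
    then show ?thesis by (intro bdd_aboveI2)
  qed
  have "(SUP x\<in>A. f x) \<le> t * (SUP x\<in>A. f x / t)"
  proof (rule cSUP_least[OF A])
    fix x assume x: "x \<in> A"
    have "f x / t \<le> (SUP x\<in>A. f x / t)" using x b2 by (intro cSUP_upper)
    then show "f x \<le> t * (SUP x\<in>A. f x / t)" using t by (simp add: field_simps)
  qed
  then show "(SUP x\<in>A. f x) / t \<le> (SUP x\<in>A. f x / t)" using t by (simp add: field_simps)
qed

definition Qn :: "(nat \<Rightarrow> real) \<Rightarrow> real \<Rightarrow> (nat \<Rightarrow> real) \<Rightarrow> real" where
  "Qn w q f = (\<Sum>k. w (Suc k) * \<bar>f (Suc k)\<bar> powr q)"

lemma lq_norm_Qn: "lq_norm w q f = Qn w q f powr (1/q)"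
  unfolding lq_norm_def Qn_def ..

lemma scale_lq:
  assumes f: "in_lq w q f" and t: "0 < t" and q: "0 < q"
  shows "in_lq w q (\<lambda>j. f j / t)" "Qn w q (\<lambda>j. f j / t) = Qn w q f / t powr q"
proof -
  have e: "w (Suc k) * \<bar>f (Suc k) / t\<bar> powr q = w (Suc k) * \<bar>f (Suc k)\<bar> powr q / t powr q" for k
    using t by (simp add: powr_divide)
  show "in_lq w q (\<lambda>j. f j / t)" using f unfolding in_lq_def e by (rule summable_divide)
  show "Qn w q (\<lambda>j. f j / t) = Qn w q f / t powr q" unfolding Qn_def e using f unfolding in_lq_def by (rule suminf_divide)
qed

lemma w_Suc: "weight w \<Longrightarrow> 0 < w (Suc k)"
  unfolding weight_def by simp

lemma w_Suc': "weight w \<Longrightarrow> 0 \<le> w (Suc k)"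
  using w_Suc[of w k] by simp

lemma Q_nonneg:
  assumes w: "weight w" and f: "in_lq w q f"
  shows "0 \<le> Qn w q f"
  unfolding Qn_def using f w_Suc'[OF w] unfolding in_lq_def by (intro suminf_nonneg mult_nonneg_nonneg) auto

lemma Q_term:
  assumes w: "weight w" and f: "in_lq w q f" and k: "1 \<le> k"
  shows "w k * \<bar>f k\<bar> powr q \<le> Qn w q f"
proof -
  obtain i where i: "k = Suc i" using k by (cases k) auto
  have "(\<Sum>j\<in>{i}. w (Suc j) * \<bar>f (Suc j)\<bar> powr q) \<le> Qn w q f"
    unfolding Qn_def using f w_Suc'[OF w] unfolding in_lq_def by (intro sum_le_suminf ballI mult_nonneg_nonneg) auto
  then show ?thesis using i by simp
qed

lemma Mprime_scale:
  assumes t: "0 < t" and k: "1 \<le> k" and b: "bdd_above (avg (\<lambda>j. \<bar>w j * f j\<bar>) ` {k..})"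
  shows "Mprime w (\<lambda>j. f j / t) k = Mprime w f k / t"
proof -
  have e: "avg (\<lambda>j. \<bar>w j * (f j / t)\<bar>) n = avg (\<lambda>j. \<bar>w j * f j\<bar>) n / t" for n
    unfolding avg_def using t by (simp add: abs_mult sum_divide_distrib[symmetric])
  have "(SUP n\<in>{k..}. avg (\<lambda>j. \<bar>w j * (f j / t)\<bar>) n) = (SUP n\<in>{k..}. avg (\<lambda>j. \<bar>w j * f j\<bar>) n / t)"
    unfolding e ..
  also have "\<dots> = (SUP n\<in>{k..}. avg (\<lambda>j. \<bar>w j * f j\<bar>) n) / t"
    using t b by (intro SUP_div) auto
  finally show ?thesis unfolding Mprime_eq[OF k] by simp
qed


lemma powr_inv1: "0 \<le> (x::real) \<Longrightarrow> 0 < r \<Longrightarrow> (x powr (1/r)) powr r = x"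
  by (simp add: powr_powr)
lemma powr_inv2: "0 \<le> (x::real) \<Longrightarrow> 0 < r \<Longrightarrow> (x powr r) powr (1/r) = x"
  by (simp add: powr_powr)

lemma mul_inv_cancel': "0 < (r::real) \<Longrightarrow> x * r * (1/r) = x" by simp

locale rdf =
  fixes p :: real and w h :: "nat \<Rightarrow> real"
  assumes p: "1 < p" and w: "weight w" and Ap: "in_Ap p w"
    and hq: "in_lq w (p/(p-1)) h" and hpos: "\<forall>k\<ge>1. h k > 0"
begin

abbreviation "q \<equiv> p/(p-1)"
abbreviation "c \<equiv> op_norm (Mprime w) w (p/(p-1))"
abbreviation "H s \<equiv> (Mprime w ^^ s) h"

lemma qpos: "0 < q" "1 < q" using p by auto

lemma wp: "1 \<le> k \<Longrightarrow> 0 < w k" using w unfolding weight_def by auto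
lemma wne: "1 \<le> k \<Longrightarrow> w k \<noteq> 0" using wp[of k] by simp

lemma MB:
  obtains C where "0 \<le> C" "\<And>f. in_lq w q f \<Longrightarrow>
     (\<forall>k\<ge>1. bdd_above (avg (\<lambda>j. \<bar>w j * f j\<bar>) ` {k..})) \<and> in_lq w q (Mprime w f) \<and>
     Qn w q (Mprime w f) \<le> C * Qn w q f"
proof -
  obtain C where C0: "0 \<le> C" and C: "\<And>f. in_lq w q f \<Longrightarrow>
     (\<forall>k\<ge>1. bdd_above (avg (\<lambda>j. \<bar>w j * f j\<bar>) ` {k..})) \<and> in_lq w q (Mprime w f) \<and>
     (\<Sum>k. w (Suc k) * \<bar>Mprime w f (Suc k)\<bar> powr q) \<le> C * (\<Sum>k. w (Suc k) * \<bar>f (Suc k)\<bar> powr q)"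
    by (rule Mprime_bound[OF p w Ap]) blast
  show ?thesis
  proof (rule that[OF C0])
    fix f assume "in_lq w q f"
    then show "(\<forall>k\<ge>1. bdd_above (avg (\<lambda>j. \<bar>w j * f j\<bar>) ` {k..})) \<and> in_lq w q (Mprime w f) \<and>
     Qn w q (Mprime w f) \<le> C * Qn w q f" unfolding Qn_def by (rule C)
  qed
qed

lemma MB_bdd:
  assumes "in_lq w q f" "1 \<le> k"
  shows "bdd_above (avg (\<lambda>j. \<bar>w j * f j\<bar>) ` {k..})"
proof -
  obtain C where "\<And>f. in_lq w q f \<Longrightarrow>
     (\<forall>k\<ge>1. bdd_above (avg (\<lambda>j. \<bar>w j * f j\<bar>) ` {k..})) \<and> in_lq w q (Mprime w f) \<and>
     Qn w q (Mprime w f) \<le> C * Qn w q f" by (rule MB) blast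
  from this[OF assms(1)] have "\<forall>k\<ge>1. bdd_above (avg (\<lambda>j. \<bar>w j * f j\<bar>) ` {k..})" by (rule conjunct1)
  then show ?thesis using assms(2) by simp
qed

lemma MB_lq:
  assumes "in_lq w q f"
  shows "in_lq w q (Mprime w f)"
proof -
  obtain C where "\<And>f. in_lq w q f \<Longrightarrow>
     (\<forall>k\<ge>1. bdd_above (avg (\<lambda>j. \<bar>w j * f j\<bar>) ` {k..})) \<and> in_lq w q (Mprime w f) \<and>
     Qn w q (Mprime w f) \<le> C * Qn w q f" by (rule MB) blast
  from this[OF assms(1)] show ?thesis by simp
qed

lemma opn_le:
  assumes f: "in_lq w q f" and f1: "lq_norm w q f \<le> 1"
  shows "lq_norm w q (Mprime w f) \<le> c"
proof -
  obtain C where C0: "0 \<le> C" and C': "\<And>f. in_lq w q f \<Longrightarrow>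
     (\<forall>k\<ge>1. bdd_above (avg (\<lambda>j. \<bar>w j * f j\<bar>) ` {k..})) \<and> in_lq w q (Mprime w f) \<and>
     Qn w q (Mprime w f) \<le> C * Qn w q f" by (rule MB) blast
  have C: "in_lq w q (Mprime w g) \<and> Qn w q (Mprime w g) \<le> C * Qn w q g" if "in_lq w q g" for g
    using C'[OF that] by simp
  have bd: "lq_norm w q (Mprime w g) \<le> C powr (1/q)" if g: "in_lq w q g" "lq_norm w q g \<le> 1" for g
  proof -
    have "lq_norm w q (Mprime w g) = Qn w q (Mprime w g) powr (1/q)" by (rule lq_norm_Qn)
    also have "\<dots> \<le> (C * Qn w q g) powr (1/q)"
      using C[OF g(1)] Q_nonneg[OF w MB_lq[OF g(1)]] qpos p by (intro powr_mono2) auto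
    also have "\<dots> = C powr (1/q) * lq_norm w q g"
      using C0 Q_nonneg[OF w g(1)] by (simp add: powr_mult lq_norm_Qn)
    also have "\<dots> \<le> C powr (1/q) * 1" using g(2) by (intro mult_left_mono) auto
    finally show ?thesis by simp
  qed
  show ?thesis
    unfolding op_norm_def
  proof (rule cSup_upper)
    show "lq_norm w q (Mprime w f) \<in> {lq_norm w q (Mprime w f) |f. in_lq w q f \<and> lq_norm w q f \<le> 1}"
      using f f1 by blast
    show "bdd_above {lq_norm w q (Mprime w f) |f. in_lq w q f \<and> lq_norm w q f \<le> 1}"
    proof (rule bdd_aboveI)
      fix x assume "x \<in> {lq_norm w q (Mprime w f) |f. in_lq w q f \<and> lq_norm w q f \<le> 1}"
      then obtain g where "x = lq_norm w q (Mprime w g)" "in_lq w q g" "lq_norm w q g \<le> 1" by blast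
      then show "x \<le> C powr (1/q)" using bd by simp
    qed
  qed
qed

lemma Mpos:
  assumes f: "in_lq w q f" and fp: "\<forall>k\<ge>1. f k > 0" and k: "1 \<le> k"
  shows "0 < Mprime w f k"
proof -
  have "0 < avg (\<lambda>j. \<bar>w j * f j\<bar>) k"
    unfolding avg_def using k fp wne by (intro divide_pos_pos sum_pos) auto
  also have "\<dots> \<le> (SUP n\<in>{k..}. avg (\<lambda>j. \<bar>w j * f j\<bar>) n)"
    using MB_bdd[OF f k] by (intro cSUP_upper) auto
  finally show ?thesis unfolding Mprime_eq[OF k] using wp[OF k] by simp
qed

lemma Qpos:
  assumes f: "in_lq w q f" and fp: "\<forall>k\<ge>1. f k > 0"
  shows "0 < Qn w q f"
proof -
  have "0 < f 1" using fp by simp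
  then have "0 < w 1 * \<bar>f 1\<bar> powr q" using wp[of 1] by simp
  also have "\<dots> \<le> Qn w q f" by (rule Q_term[OF w f]) simp
  finally show ?thesis .
qed

lemma Mstep:
  assumes f: "in_lq w q f" and fp: "\<forall>k\<ge>1. f k > 0"
  shows "0 \<le> c" "Qn w q (Mprime w f) \<le> c powr q * Qn w q f"
proof -
  define t where "t = Qn w q f powr (1/q)"
  have Qp: "0 < Qn w q f" by (rule Qpos[OF f fp])
  have tp: "0 < t" unfolding t_def using Qp by simp
  have tq: "t powr q = Qn w q f" unfolding t_def using Qp qpos by (intro powr_inv1) auto
  define f' where "f' j = f j / t" for j
  have f'l: "in_lq w q f'" unfolding f'_def by (rule scale_lq(1)[OF f tp qpos(1)])
  have "Qn w q f' = 1" unfolding f'_def scale_lq(2)[OF f tp qpos(1)] tq using Qp by simp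
  then have "lq_norm w q f' \<le> 1" unfolding lq_norm_Qn by simp
  then have le: "lq_norm w q (Mprime w f') \<le> c" by (rule opn_le[OF f'l])
  have "Qn w q (Mprime w f') = Qn w q (\<lambda>k. Mprime w f k / t)"
    unfolding Qn_def f'_def using Mprime_scale[OF tp _ MB_bdd[OF f]] by simp
  also have "\<dots> = Qn w q (Mprime w f) / Qn w q f"
    using scale_lq(2)[OF MB_lq[OF f] tp qpos(1)] tq by simp
  finally have e: "Qn w q (Mprime w f') = Qn w q (Mprime w f) / Qn w q f" .
  have x0: "0 \<le> Qn w q (Mprime w f) / Qn w q f" using Q_nonneg[OF w MB_lq[OF f]] Qp by simp
  have le2: "(Qn w q (Mprime w f) / Qn w q f) powr (1/q) \<le> c" using le unfolding lq_norm_Qn e .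
  then show "0 \<le> c" using order_trans[OF powr_ge_zero le2] by simp
  have "Qn w q (Mprime w f) / Qn w q f = ((Qn w q (Mprime w f) / Qn w q f) powr (1/q)) powr q"
    using x0 qpos by (intro powr_inv1[symmetric]) auto
  also have "\<dots> \<le> c powr q" using le2 qpos by (intro powr_mono2) auto
  finally show "Qn w q (Mprime w f) \<le> c powr q * Qn w q f" using Qp by (simp add: field_simps)
qed

lemma iter:
  "in_lq w q (H s) \<and> (\<forall>k\<ge>1. H s k > 0) \<and> Qn w q (H s) \<le> (c powr q) ^ s * Qn w q h"
proof (induction s)
  case 0 then show ?case using hq hpos by simp
next
  case (Suc s)
  then have a: "in_lq w q (H s)" "\<forall>k\<ge>1. H s k > 0" "Qn w q (H s) \<le> (c powr q) ^ s * Qn w q h" by auto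
  have e: "H (Suc s) = Mprime w (H s)" by simp
  have "Qn w q (H (Suc s)) \<le> c powr q * Qn w q (H s)" unfolding e by (rule Mstep(2)[OF a(1,2)])
  also have "\<dots> \<le> c powr q * ((c powr q) ^ s * Qn w q h)" using a(3) by (intro mult_left_mono) auto
  finally show ?case unfolding e using MB_lq[OF a(1)] Mpos[OF a(1,2)] by (simp add: ac_simps)
qed

lemma c_pos: "0 < c"
proof -
  have c0: "0 \<le> c" by (rule Mstep(1)[OF hq hpos])
  have "0 < Qn w q (Mprime w h)" using Qpos[OF MB_lq[OF hq]] Mpos[OF hq hpos] by simp
  also have "\<dots> \<le> c powr q * Qn w q h" by (rule Mstep(2)[OF hq hpos])
  finally have "c \<noteq> 0" by auto
  then show ?thesis using c0 by simp
qed

lemma pt: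
  assumes k: "1 \<le> k"
  shows "H s k \<le> c ^ s * (Qn w q h / w k) powr (1/q)"
proof -
  have I: "in_lq w q (H s)" "\<forall>k\<ge>1. H s k > 0" "Qn w q (H s) \<le> (c powr q) ^ s * Qn w q h" using iter by auto
  have hp: "0 < H s k" using I(2) k by simp
  have "w k * (H s k) powr q \<le> Qn w q (H s)" using Q_term[OF w I(1) k] hp by simp
  also have "\<dots> \<le> (c powr q) ^ s * Qn w q h" by (rule I(3))
  finally have "(H s k) powr q \<le> (c powr q) ^ s * Qn w q h / w k" using wp[OF k] by (simp add: field_simps)
  then have "H s k \<le> ((c powr q) ^ s * Qn w q h / w k) powr (1/q)" using hp qpos by (intro root_le) auto
  also have "\<dots> = ((c powr q) ^ s * (Qn w q h / w k)) powr (1/q)" by simp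
  also have "\<dots> = ((c powr q) ^ s) powr (1/q) * (Qn w q h / w k) powr (1/q)"
    using c_pos Q_nonneg[OF w hq] wp[OF k] by (intro powr_mult)
  also have "((c powr q) ^ s) powr (1/q) = c ^ s"
  proof -
    have "((c powr q) ^ s) powr (1/q) = (c powr (real s * q)) powr (1/q)" using c_pos by (simp add: powr_power)
    also have "\<dots> = c powr (real s * q * (1/q))" by (rule powr_powr)
    also have "\<dots> = c powr (real s)" using mul_inv_cancel'[OF qpos(1), of "real s"] by (simp only:)
    also have "\<dots> = c ^ s" using c_pos by (simp add: powr_realpow)
    finally show ?thesis .
  qed
  finally show ?thesis .
qed

end


context rdf begin

abbreviation "a s j \<equiv> H s j / (2 ^ s * c ^ s)"

lemma Hpos: "1 \<le> k \<Longrightarrow> 0 < H s k" using iter by auto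

lemma Nsum: assumes k: "1 \<le> k" shows "summable (\<lambda>s. a s k)"
proof -
  define B where "B = (Qn w q h / w k) powr (1/q)"
  show ?thesis
  proof (rule summable_comparison_test'[of "\<lambda>s. B * (1/2) ^ s" 0])
    show "summable (\<lambda>s. B * (1/2) ^ s)" by (intro summable_mult summable_geometric) simp
    fix s :: nat
    have "0 < H s k" using Hpos k .
    moreover have "H s k \<le> c ^ s * B" unfolding B_def using pt[OF k] .
    moreover have "0 < c ^ s" using c_pos by simp
    ultimately have "H s k / (2 ^ s * c ^ s) \<le> c ^ s * B / (2 ^ s * c ^ s)"
      by (intro divide_right_mono) auto
    also have "\<dots> = B * (1/2) ^ s" using c_pos by (simp add: power_one_over field_simps)
    finally show "norm (a s k) \<le> B * (1/2) ^ s" using \<open>0 < H s k\<close> c_pos by simp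
  qed
qed

lemma N_ge_h: assumes k: "1 \<le> k" shows "h k \<le> Nprime p w h k"
proof -
  have "(\<Sum>s\<in>{0}. a s k) \<le> (\<Sum>s. a s k)"
    using Nsum[OF k] Hpos[OF k] c_pos by (intro sum_le_suminf) (auto intro!: divide_nonneg_pos less_imp_le)
  then show ?thesis unfolding Nprime_def by simp
qed

lemma N_pos: "1 \<le> k \<Longrightarrow> 0 < Nprime p w h k"
  using N_ge_h[of k] hpos by fastforce

lemma A1ineq:
  assumes k: "1 \<le> k" and kn: "k \<le> n"
  shows "avg (\<lambda>j. \<bar>Nprime p w h j * w j\<bar>) n \<le> 2 * c * (Nprime p w h k * w k)"
proof -
  have n: "1 \<le> n" using k kn by simp
  have sS: "summable (\<lambda>s. a (Suc s) k)" using Nsum[OF k] summable_Suc_iff[of "\<lambda>s. a s k"] by blast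
  have sj: "summable (\<lambda>s. w j * a s j)" if "j \<in> {1..n}" for j using Nsum[of j] that by (intro summable_mult) auto
  have "(\<Sum>j=1..n. \<bar>Nprime p w h j * w j\<bar>) = (\<Sum>j=1..n. \<Sum>s. w j * a s j)"
  proof (rule sum.cong[OF refl])
    fix j assume j: "j \<in> {1..n}"
    then have "0 < Nprime p w h j" "0 < w j" using N_pos wp by auto
    then have "\<bar>Nprime p w h j * w j\<bar> = w j * Nprime p w h j" by simp
    also have "\<dots> = (\<Sum>s. w j * a s j)" unfolding Nprime_def using Nsum[of j] j by (intro suminf_mult[symmetric]) auto
    finally show "\<bar>Nprime p w h j * w j\<bar> = (\<Sum>s. w j * a s j)" .
  qed
  also have "\<dots> = (\<Sum>s. \<Sum>j=1..n. w j * a s j)" using sj by (intro suminf_sum[symmetric]) auto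
  also have "\<dots> \<le> (\<Sum>s. real n * w k * (2 * c) * a (Suc s) k)"
  proof (rule suminf_le)
    show "summable (\<lambda>s. \<Sum>j=1..n. w j * a s j)" using sj by (intro summable_sum) auto
    show "summable (\<lambda>s. real n * w k * (2 * c) * a (Suc s) k)"
      using sS by (rule summable_mult)
    fix s :: nat
    have I: "in_lq w q (H s)" using iter by auto
    have "(\<Sum>j=1..n. w j * a s j) = real n * avg (\<lambda>j. \<bar>w j * H s j\<bar>) n / (2 ^ s * c ^ s)"
    proof -
      have "(\<Sum>j=1..n. w j * a s j) = (\<Sum>j=1..n. \<bar>w j * H s j\<bar>) / (2 ^ s * c ^ s)"
        unfolding sum_divide_distrib
      proof (intro sum.cong refl)
        fix j assume "j \<in> {1..n}"
        then have "0 < w j" "0 < H s j" using wp Hpos by auto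
        then show "w j * a s j = \<bar>w j * H s j\<bar> / (2 ^ s * c ^ s)" by simp
      qed
      then show ?thesis unfolding avg_def using n by simp
    qed
    also have "\<dots> \<le> real n * (w k * H (Suc s) k) / (2 ^ s * c ^ s)"
    proof (intro divide_right_mono mult_left_mono)
      have "avg (\<lambda>j. \<bar>w j * H s j\<bar>) n \<le> (SUP m\<in>{k..}. avg (\<lambda>j. \<bar>w j * H s j\<bar>) m)"
        using MB_bdd[OF I k] kn by (intro cSUP_upper) auto
      also have "\<dots> = w k * Mprime w (H s) k" unfolding Mprime_eq[OF k] using wp[OF k] by simp
      also have "Mprime w (H s) = H (Suc s)" by simp
      finally show "avg (\<lambda>j. \<bar>w j * H s j\<bar>) n \<le> w k * H (Suc s) k" .
    qed (use c_pos in auto)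
    also have "\<dots> = real n * w k * (2 * c) * a (Suc s) k" using c_pos by (simp add: field_simps)
    finally show "(\<Sum>j=1..n. w j * a s j) \<le> real n * w k * (2 * c) * a (Suc s) k" .
  qed
  also have "\<dots> = real n * w k * (2 * c) * (\<Sum>s. a (Suc s) k)"
    using sS by (rule suminf_mult)
  also have "(\<Sum>s. a (Suc s) k) = Nprime p w h k - h k"
    unfolding Nprime_def using suminf_split_head[OF Nsum[OF k]] by simp
  also have "\<dots> \<le> Nprime p w h k" using hpos k by fastforce
  finally have "(\<Sum>j=1..n. \<bar>Nprime p w h j * w j\<bar>) \<le> real n * w k * (2 * c) * Nprime p w h k"
    using wp[OF k] c_pos n by (simp add: mult_left_mono)
  then show ?thesis unfolding avg_def using n by (simp add: field_simps)
qed

end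


lemma final_char:
  fixes p0 p C0 :: real and w N :: "nat \<Rightarrow> real" and n :: nat
  assumes p0: "1 < p0" "p0 < p" and n: "1 \<le> n" and wpos: "\<And>k. 1 \<le> k \<Longrightarrow> 0 < w k"
    and Npos: "\<And>k. 1 \<le> k \<Longrightarrow> 0 < N k" and C0: "0 < C0"
    and A1: "\<And>k. 1 \<le> k \<Longrightarrow> k \<le> n \<Longrightarrow> avg (\<lambda>j. \<bar>N j * w j\<bar>) n \<le> C0 * (N k * w k)"
  shows "Ap_char p0 (\<lambda>k. w k * N k powr ((p - p0)/(p - 1))) n
     \<le> C0 powr ((p - p0)/(p - 1)) * Ap_char p w n powr ((p0 - 1)/(p - 1))"
proof -
  define a where "a = (p - p0)/(p - 1)"
  define b where "b = (p0 - 1)/(p - 1)"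
  have pp: "0 < p - 1" using p0 by simp
  have "a + b = ((p - p0) + (p0 - 1))/(p-1)" unfolding a_def b_def by (rule add_divide_distrib[symmetric])
  then have ab1: "a + b = 1" using pp by simp
  have "0 < a" "0 < b" unfolding a_def b_def using p0 pp by auto
  then have ab: "a + b = 1" "0 < a" "a < 1" "0 < b" "b < 1" using ab1 by auto
  define u where "u k = N k * w k" for k
  define v where "v k = w k * N k powr a" for k
  define U where "U = (\<Sum>j=1..n. u j)"
  define W where "W = (\<Sum>j=1..n. w j)"
  define Sg where "Sg = (\<Sum>j=1..n. w j powr (-1/(p-1)))"
  have up: "0 < u k" if "1 \<le> k" for k unfolding u_def using wpos Npos that by simp
  have Up: "0 < U" unfolding U_def using up n by (intro sum_pos) auto
  have Wp: "0 < W" unfolding W_def using wpos n by (intro sum_pos) auto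
  have Sgp: "0 < Sg" unfolding Sg_def using wpos n by (intro sum_pos) (auto simp: less_imp_neq[symmetric])
  have np: "0 < real n" using n by simp
  have v_eq: "v k = w k powr b * u k powr a" if k: "1 \<le> k" for k
  proof -
    have "w k powr b * u k powr a = w k powr b * (N k powr a * w k powr a)"
      unfolding u_def using wpos[OF k] Npos[OF k] by (simp add: powr_mult)
    also have "\<dots> = (w k powr b * w k powr a) * N k powr a" by simp
    also have "w k powr b * w k powr a = w k powr (b + a)" by (rule powr_add[symmetric])
    also have "b + a = 1" using ab by simp
    finally show ?thesis unfolding v_def using wpos[OF k] by simp
  qed
  have sumv: "(\<Sum>k=1..n. v k) \<le> W powr b * U powr a"
  proof -
    have "(\<Sum>k=1..n. v k) = (\<Sum>k=1..n. w k powr b * u k powr (1 - b))"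
    proof (intro sum.cong refl)
      fix k assume "k \<in> {1..n}"
      moreover have "1 - b = a" using ab(1) by simp
      ultimately show "v k = w k powr b * u k powr (1 - b)" using v_eq[of k] by simp
    qed
    also have "\<dots> \<le> W powr b * U powr (1 - b)"
      unfolding W_def U_def using wpos up ab by (intro holder_sum) (auto intro: less_imp_le)
    also have "1 - b = a" using ab(1) by simp
    finally show ?thesis .
  qed
  define e where "e = a / (p0 - 1)"
  have e0: "0 < e" unfolding e_def using ab p0 by simp
  have be: "b / (p0 - 1) = 1/(p-1)"
  proof -
    have ne: "p0 - 1 \<noteq> 0" using p0 by simp
    have "b / (p0 - 1) = ((p0 - 1) * 1) / ((p0 - 1) * (p - 1))" unfolding b_def by (simp add: ac_simps)
    also have "\<dots> = 1 / (p - 1)" using ne by (rule mult_divide_mult_cancel_left)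
    finally show ?thesis .
  qed
  have uk: "U / (real n * C0) \<le> u k" if k: "1 \<le> k" "k \<le> n" for k
  proof -
    have "avg (\<lambda>j. \<bar>N j * w j\<bar>) n = U / real n"
    proof -
      have "(\<Sum>j=1..n. \<bar>N j * w j\<bar>) = U" unfolding U_def
      proof (rule sum.cong[OF refl])
        fix j assume "j \<in> {1..n}"
        then have "0 < u j" using up by auto
        then show "\<bar>N j * w j\<bar> = u j" unfolding u_def by simp
      qed
      then show ?thesis unfolding avg_def by simp
    qed
    then have "U / real n \<le> C0 * u k" using A1[OF k] unfolding u_def by simp
    then show ?thesis using C0 np by (simp add: field_simps)
  qed
  have vk: "v k powr (-1/(p0-1)) \<le> (real n * C0 / U) powr e * w k powr (-1/(p-1))" if k: "1 \<le> k" "k \<le> n" for k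
  proof -
    have "v k powr (-1/(p0-1)) = (w k powr b) powr (-1/(p0-1)) * (u k powr a) powr (-1/(p0-1))"
      unfolding v_eq[OF k(1)] by (intro powr_mult)
    also have "(w k powr b) powr (-1/(p0-1)) = w k powr (-1/(p-1))"
      using be by (simp add: powr_powr)
    also have "(u k powr a) powr (-1/(p0-1)) = u k powr (-e)"
      unfolding e_def by (simp add: powr_powr)
    also have "u k powr (-e) \<le> (U / (real n * C0)) powr (-e)"
      using uk[OF k] Up np C0 e0 by (intro powr_mono2') auto
    also have "(U / (real n * C0)) powr (-e) = (real n * C0 / U) powr e"
      using Up np C0 by (simp add: powr_minus_divide powr_divide)
    finally show ?thesis using wpos[OF k(1)] by (simp add: mult.commute)
  qed
  have avgv: "avg (\<lambda>k. v k powr (-1/(p0-1))) n \<le> (real n * C0 / U) powr e * (Sg / real n)"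
  proof -
    have "(\<Sum>k=1..n. v k powr (-1/(p0-1))) \<le> (\<Sum>k=1..n. (real n * C0 / U) powr e * w k powr (-1/(p-1)))"
      using vk by (intro sum_mono) auto
    also have "\<dots> = (real n * C0 / U) powr e * Sg" unfolding Sg_def by (simp add: sum_distrib_left)
    finally show ?thesis unfolding avg_def using np by (simp add: divide_right_mono)
  qed
  have avgv2: "(avg (\<lambda>k. v k powr (-1/(p0-1))) n) powr (p0 - 1) \<le> (real n * C0 / U) powr a * (Sg / real n) powr (p0 - 1)"
  proof -
    have "0 \<le> avg (\<lambda>k. v k powr (-1/(p0-1))) n" unfolding avg_def by (intro divide_nonneg_nonneg sum_nonneg) auto
    then have "(avg (\<lambda>k. v k powr (-1/(p0-1))) n) powr (p0 - 1) \<le> ((real n * C0 / U) powr e * (Sg / real n)) powr (p0 - 1)"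
      using avgv p0 by (intro powr_mono2) auto
    also have "\<dots> = ((real n * C0 / U) powr e) powr (p0 - 1) * (Sg / real n) powr (p0 - 1)"
      by (intro powr_mult)
    also have "((real n * C0 / U) powr e) powr (p0 - 1) = (real n * C0 / U) powr a"
      unfolding e_def using p0 by (simp add: powr_powr)
    finally show ?thesis .
  qed
  have "Ap_char p0 v n = ((\<Sum>k=1..n. v k) / real n) * (avg (\<lambda>k. v k powr (-1/(p0-1))) n) powr (p0 - 1)"
    unfolding Ap_char_def avg_def ..
  also have "\<dots> \<le> (W powr b * U powr a / real n) * ((real n * C0 / U) powr a * (Sg / real n) powr (p0 - 1))"
    using sumv avgv2 np by (intro mult_mono divide_right_mono) (auto intro: sum_nonneg)
  also have "\<dots> = C0 powr a * ((W / real n) powr b * (Sg / real n) powr (p0 - 1))"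
  proof -
    have "real n powr a * real n powr b = real n" using ab np by (simp add: powr_add[symmetric])
    then show ?thesis using np Up Wp C0 by (simp add: powr_divide powr_mult field_simps)
  qed
  also have "(W / real n) powr b * (Sg / real n) powr (p0 - 1) = Ap_char p w n powr b"
  proof -
    have "Ap_char p w n = (W / real n) * (Sg / real n) powr (p - 1)"
      unfolding Ap_char_def avg_def W_def Sg_def ..
    moreover have "((W / real n) * (Sg / real n) powr (p - 1)) powr b = (W / real n) powr b * ((Sg / real n) powr (p - 1)) powr b"
      using Wp np by (intro powr_mult)
    ultimately have "Ap_char p w n powr b = (W / real n) powr b * ((Sg / real n) powr (p - 1)) powr b"
      by (simp only:)
    also have "((Sg / real n) powr (p - 1)) powr b = (Sg / real n) powr (p0 - 1)"
      unfolding b_def using p0 by (simp add: powr_powr)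
    finally show ?thesis by simp
  qed
  finally show ?thesis unfolding v_def a_def b_def .
qed


theorem lemma2p6:
  fixes p0 p :: real and w h :: "nat \<Rightarrow> real"
  assumes "1 < p0" "p0 < p"
    and "weight w" "in_Ap p w"
    and "in_lq w (p / (p - 1)) h"
    and "\<forall>k\<ge>1. h k > 0"
  shows "in_Ap p0 (\<lambda>k. w k * Nprime p w h k powr ((p - p0) / (p - 1)))
    \<and> Ap_const p0 (\<lambda>k. w k * Nprime p w h k powr ((p - p0) / (p - 1)))
      \<le> A1_const (\<lambda>k. Nprime p w h k * w k) powr ((p - p0) / (p - 1))
         * Ap_const p w powr ((p0 - 1) / (p - 1))"
proof -
  have p: "1 < p" using assms by simp
  interpret r: rdf p w h using assms p by unfold_locales auto
  define u where "u = (\<lambda>k. Nprime p w h k * w k)"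
  define C0 where "C0 = A1_const u"
  have up: "0 < u k" if "1 \<le> k" for k unfolding u_def using r.N_pos[OF that] r.wp[OF that] by simp
  have avg1: "avg (\<lambda>j. \<bar>u j\<bar>) 1 = u 1" unfolding avg_def using up[of 1] by simp
  have ne: "A1_bounds u \<noteq> {}"
  proof -
    have "2 * r.c \<in> A1_bounds u" unfolding A1_bounds_def u_def using r.A1ineq by auto
    then show ?thesis by auto
  qed
  have ge1: "1 \<le> C" if "C \<in> A1_bounds u" for C
  proof -
    have "avg (\<lambda>j. \<bar>u j\<bar>) 1 \<le> C * u 1" using that unfolding A1_bounds_def by auto
    then have "u 1 \<le> C * u 1" unfolding avg1 .
    then show ?thesis using up[of 1] by simp
  qed
  have C0ge: "1 \<le> C0" unfolding C0_def A1_const_def using ne ge1 by (intro cInf_greatest) auto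
  have A1: "avg (\<lambda>j. \<bar>Nprime p w h j * w j\<bar>) n \<le> C0 * (Nprime p w h k * w k)" if k: "1 \<le> k" "k \<le> n" for k n
  proof -
    have "avg (\<lambda>j. \<bar>u j\<bar>) n / u k \<le> C0"
      unfolding C0_def A1_const_def
    proof (rule cInf_greatest[OF ne])
      fix C assume "C \<in> A1_bounds u"
      then have "avg (\<lambda>j. \<bar>u j\<bar>) n \<le> C * u k" using k unfolding A1_bounds_def by auto
      then show "avg (\<lambda>j. \<bar>u j\<bar>) n / u k \<le> C" using up[OF k(1)] by (simp add: divide_le_eq)
    qed
    then show ?thesis using up[OF k(1)] unfolding u_def by (simp add: divide_le_eq)
  qed
  define B where "B = C0 powr ((p - p0) / (p - 1)) * Ap_const p w powr ((p0 - 1) / (p - 1))"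
  have bound: "Ap_char p0 (\<lambda>k. w k * Nprime p w h k powr ((p - p0) / (p - 1))) n \<le> B" if n: "n \<in> {1..}" for n
  proof -
    have n1: "1 \<le> n" using n by simp
    have "Ap_char p0 (\<lambda>k. w k * Nprime p w h k powr ((p - p0) / (p - 1))) n
        \<le> C0 powr ((p - p0)/(p - 1)) * Ap_char p w n powr ((p0 - 1)/(p - 1))"
      using assms(1,2) n1 r.wp r.N_pos C0ge A1 by (intro final_char) auto
    also have "\<dots> \<le> B" unfolding B_def
    proof (intro mult_left_mono powr_mono2)
      show "Ap_char p w n \<le> Ap_const p w"
        unfolding Ap_const_def using assms(4) n unfolding in_Ap_def by (intro cSUP_upper) auto
      show "0 \<le> Ap_char p w n" unfolding Ap_char_def avg_def using r.wp
        by (intro mult_nonneg_nonneg divide_nonneg_nonneg sum_nonneg) (auto intro: less_imp_le)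
    qed (use assms in auto)
    finally show ?thesis .
  qed
  have "in_Ap p0 (\<lambda>k. w k * Nprime p w h k powr ((p - p0) / (p - 1)))"
    unfolding in_Ap_def using bound by (intro bdd_aboveI2) auto
  moreover have "Ap_const p0 (\<lambda>k. w k * Nprime p w h k powr ((p - p0) / (p - 1))) \<le> B"
    unfolding Ap_const_def using bound by (intro cSUP_least) auto
  ultimately show ?thesis unfolding B_def C0_def u_def by simp
qed


end
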